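(* Let $p,q\ge2$ be natural numbers. Then there exists a c.p.c. order zero map $\varphi\colon M_p\to M_{q^\infty}$ such that $\varphi(1_p)$ is a Lebesgue contraction.
   Context: $M_{q^\infty}$ is the UHF-algebra given as the inductive limit of $M_{q^n}\to M_{q^{n+1}}$, $x\mapsto1_q\otimes x$. A c.p.c. order zero map is a completely positive contractive linear map $\varphi$ with $\varphi(x)\varphi(y)=0$ whenever $xy=0$. A positive contraction $h$ in $M_{q^\infty}$ is a Lebesgue contraction if $\tau(f(h))=\int_0^1f(t)\,dt$ for all $f\in C_0(0,1]$, where $\tau$ is the unique tracial state. *)

theory Defs
  imports "HOL-Analysis.Analysis" "Jordan_Normal_Form.Matrix" "Jordan_Normal_Form.Schur_Decomposition"
begin

definition vnorm :: "complex Matrix.vec \<Rightarrow> real" where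
  "vnorm v = sqrt (\<Sum>i<dim_vec v. (cmod (vec_index v i))^2)"

definition opnorm :: "complex mat \<Rightarrow> real" where
  "opnorm A = Sup {vnorm (A *\<^sub>v v) | v. v \<in> carrier_vec (dim_col A) \<and> vnorm v \<le> 1}"

text \<open>Normalised trace (the unique tracial state on M_n).\<close>
definition ntrace :: "complex mat \<Rightarrow> complex" where
  "ntrace A = (\<Sum>i<dim_row A. A $$ (i,i)) / of_nat (dim_row A)"

definition psd :: "complex mat \<Rightarrow> bool" where
  "psd A \<longleftrightarrow> A \<in> carrier_mat (dim_row A) (dim_row A) \<and>
     (\<exists>B. B \<in> carrier_mat (dim_row A) (dim_row A) \<and> A = mat_adjoint B * B)"

definition unitary_mat :: "nat \<Rightarrow> complex mat \<Rightarrow> bool" where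
  "unitary_mat n U \<longleftrightarrow> U \<in> carrier_mat n n \<and> mat_adjoint U * U = 1\<^sub>m n"

definition diag_of :: "nat \<Rightarrow> (nat \<Rightarrow> complex) \<Rightarrow> complex mat" where
  "diag_of n c = mat n n (\<lambda>(i,j). if i = j then c i else 0)"

definition mat_fun :: "(real \<Rightarrow> complex) \<Rightarrow> complex mat \<Rightarrow> complex mat" where
  "mat_fun f A = (SOME B. \<exists>U d. unitary_mat (dim_row A) U \<and>
      A = U * diag_of (dim_row A) (\<lambda>i. complex_of_real (d i)) * mat_adjoint U \<and>
      B = U * diag_of (dim_row A) (\<lambda>i. f (d i)) * mat_adjoint U)"

text \<open>Block matrix in M_n(M_m) = M_{n m}: block (i,j) is X i j.\<close>
definition blockmat :: "nat \<Rightarrow> nat \<Rightarrow> (nat \<Rightarrow> nat \<Rightarrow> complex mat) \<Rightarrow> complex mat" where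
  "blockmat n m X = mat (n*m) (n*m) (\<lambda>(i,j). X (i div m) (j div m) $$ (i mod m, j mod m))"

text \<open>Connecting map M_{q^n} \<rightarrow> M_{q^(n+1)}, x \<mapsto> 1_q \<otimes> x.\<close>
definition kron_id :: "nat \<Rightarrow> complex mat \<Rightarrow> complex mat" where
  "kron_id q x = mat (q * dim_row x) (q * dim_col x)
     (\<lambda>(i,j). if i div dim_row x = j div dim_col x
              then x $$ (i mod dim_row x, j mod dim_col x) else 0)"

definition uhf_emb :: "nat \<Rightarrow> nat \<Rightarrow> nat \<Rightarrow> complex mat \<Rightarrow> complex mat" where
  "uhf_emb q m n x = (kron_id q ^^ (n - m)) x"

text \<open>M_{q^\<infinity>} is modelled as the completion of the union of the M_{q^k}: an element is
  represented by a sequence s with s k \<in> M_{q^k} which is Cauchy along the connecting maps;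
  two representatives are equal iff their difference tends to 0 in norm.\<close>
definition uhf_elem :: "nat \<Rightarrow> (nat \<Rightarrow> complex mat) \<Rightarrow> bool" where
  "uhf_elem q s \<longleftrightarrow> (\<forall>k. s k \<in> carrier_mat (q^k) (q^k)) \<and>
     (\<forall>\<epsilon>>0. \<exists>N. \<forall>m n. N \<le> m \<longrightarrow> m \<le> n \<longrightarrow> opnorm (uhf_emb q m n (s m) - s n) < \<epsilon>)"

definition uhf_eq :: "(nat \<Rightarrow> complex mat) \<Rightarrow> (nat \<Rightarrow> complex mat) \<Rightarrow> bool" where
  "uhf_eq s t \<longleftrightarrow> (\<lambda>k. opnorm (s k - t k)) \<longlonglongrightarrow> 0"

definition uhf_norm :: "(nat \<Rightarrow> complex mat) \<Rightarrow> real" where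
  "uhf_norm s = lim (\<lambda>k. opnorm (s k))"

text \<open>Positivity: the positive cone of the inductive limit is the closure of the union of
  the positive cones of the M_{q^k}.\<close>
definition uhf_pos :: "nat \<Rightarrow> (nat \<Rightarrow> complex mat) \<Rightarrow> bool" where
  "uhf_pos q s \<longleftrightarrow> (\<exists>t. (\<forall>k. t k \<in> carrier_mat (q^k) (q^k) \<and> psd (t k)) \<and> uhf_eq s t)"

text \<open>Positivity in M_n(M_{q^\<infinity>}) = inductive limit of M_n(M_{q^k}); X i j (i,j<n) are
  elements of M_{q^\<infinity>}.\<close>
definition uhf_matpos :: "nat \<Rightarrow> nat \<Rightarrow> (nat \<Rightarrow> nat \<Rightarrow> nat \<Rightarrow> complex mat) \<Rightarrow> bool" where
  "uhf_matpos q n X \<longleftrightarrow> (\<exists>t. (\<forall>k. t k \<in> carrier_mat (n * q^k) (n * q^k) \<and> psd (t k)) \<and>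
      (\<lambda>k. opnorm (blockmat n (q^k) (\<lambda>i j. X i j k) - t k)) \<longlonglongrightarrow> 0)"

definition cpc_order_zero :: "nat \<Rightarrow> nat \<Rightarrow> (complex mat \<Rightarrow> nat \<Rightarrow> complex mat) \<Rightarrow> bool" where
  "cpc_order_zero p q \<phi> \<longleftrightarrow>
     \<comment> \<open>maps M_p into M_{q^\<infinity>}\<close>
     (\<forall>x \<in> carrier_mat p p. uhf_elem q (\<phi> x)) \<and>
     \<comment> \<open>linear\<close>
     (\<forall>x \<in> carrier_mat p p. \<forall>y \<in> carrier_mat p p. \<forall>c::complex.
        uhf_eq (\<phi> (c \<cdot>\<^sub>m x + y)) (\<lambda>k. c \<cdot>\<^sub>m \<phi> x k + \<phi> y k)) \<and>
     \<comment> \<open>completely positive\<close>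
     (\<forall>n\<ge>1. \<forall>X. (\<forall>i<n. \<forall>j<n. X i j \<in> carrier_mat p p) \<longrightarrow> psd (blockmat n p X) \<longrightarrow>
        uhf_matpos q n (\<lambda>i j. \<phi> (X i j))) \<and>
     \<comment> \<open>contractive\<close>
     (\<forall>x \<in> carrier_mat p p. uhf_norm (\<phi> x) \<le> opnorm x) \<and>
     \<comment> \<open>order zero\<close>
     (\<forall>x \<in> carrier_mat p p. \<forall>y \<in> carrier_mat p p. x * y = 0\<^sub>m p p \<longrightarrow>
        uhf_eq (\<lambda>k. \<phi> x k * \<phi> y k) (\<lambda>k. 0\<^sub>m (q^k) (q^k)))"

text \<open>h is a positive contraction with tau(f(h)) = integral_0^1 f for all f in C_0(0,1]
  (= continuous functions on [0,1] vanishing at 0).  tau(f(h)) is computed as the limit of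
  the normalised traces of f(t k) for positive contractions t k \<in> M_{q^k} converging to h.\<close>
definition lebesgue_contraction :: "nat \<Rightarrow> (nat \<Rightarrow> complex mat) \<Rightarrow> bool" where
  "lebesgue_contraction q h \<longleftrightarrow> uhf_elem q h \<and> uhf_pos q h \<and> uhf_norm h \<le> 1 \<and>
     (\<forall>f :: real \<Rightarrow> complex. continuous_on {0..1} f \<and> f 0 = 0 \<longrightarrow>
        (\<exists>t. (\<forall>k. t k \<in> carrier_mat (q^k) (q^k) \<and> psd (t k) \<and> opnorm (t k) \<le> 1) \<and>
             uhf_eq h t \<and>
             (\<lambda>k. ntrace (mat_fun f (t k))) \<longlonglongrightarrow> integral {0..1} f))"

end

theory Submission
  imports Defs
begin


lemma mult_entry:
  assumes "i < dim_row A" "j < dim_col B" "dim_col A = dim_row B"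
  shows "(A * B) $$ (i,j) = (\<Sum>k<dim_col A. A $$ (i,k) * B $$ (k,j))"
  using assms by (simp add: scalar_prod_def atLeast0LessThan)

lemma mult_vec_entry:
  assumes "i < dim_row A" "dim_vec v = dim_col A"
  shows "(A *\<^sub>v v) $ i = (\<Sum>j<dim_col A. A $$ (i,j) * v $ j)"
  using assms by (simp add: scalar_prod_def atLeast0LessThan)

lemma adjoint_alt: "mat_adjoint (A :: complex mat) = mat (dim_col A) (dim_row A) (\<lambda>(i,j). cnj (A $$ (j,i)))"
  by (rule eq_matI) (auto simp: mat_adjoint_def mat_of_rows_index)

lemma vnorm_ge0: "vnorm v \<ge> 0" unfolding vnorm_def by (simp add: sum_nonneg)

lemma vnorm_sq: "(vnorm v)^2 = (\<Sum>i<dim_vec v. (cmod (v $ i))^2)"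
  unfolding vnorm_def by (simp add: sum_nonneg)

lemma vnorm_le_iff: "c \<ge> 0 \<Longrightarrow> vnorm v \<le> c \<longleftrightarrow> (\<Sum>i<dim_vec v. (cmod (v $ i))^2) \<le> c^2"
proof -
  assume c: "c \<ge> 0"
  have "c = sqrt (c^2)" using c by simp
  then have "vnorm v \<le> c \<longleftrightarrow> vnorm v \<le> sqrt (c^2)" by simp
  also have "\<dots> \<longleftrightarrow> (\<Sum>i<dim_vec v. (cmod (v $ i))^2) \<le> c^2"
    unfolding vnorm_def by (rule real_sqrt_le_iff)
  finally show ?thesis .
qed

lemma comp_le_vnorm: "i < dim_vec v \<Longrightarrow> cmod (v $ i) \<le> vnorm v"
proof -
  assume i: "i < dim_vec v"
  have "(cmod (v $ i))^2 \<le> (\<Sum>j<dim_vec v. (cmod (v $ j))^2)"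
    by (rule member_le_sum) (use i in auto)
  then show ?thesis unfolding vnorm_def by (simp add: real_le_rsqrt)
qed


lemma vnorm_smult: "vnorm (c \<cdot>\<^sub>v v) = cmod c * vnorm v"
proof -
  have "(\<Sum>i<dim_vec v. (cmod ((c \<cdot>\<^sub>v v) $ i))^2) = (cmod c)^2 * (\<Sum>i<dim_vec v. (cmod (v $ i))^2)"
    by (simp add: sum_distrib_left norm_mult power_mult_distrib)
  then show ?thesis unfolding vnorm_def by (simp add: real_sqrt_mult)
qed

lemma vnorm_zero_iff: "vnorm v = 0 \<longleftrightarrow> (\<forall>i<dim_vec v. v $ i = 0)"
proof
  assume "vnorm v = 0"
  then show "\<forall>i<dim_vec v. v $ i = 0" using comp_le_vnorm[of _ v] by (metis norm_le_zero_iff)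
next
  assume "\<forall>i<dim_vec v. v $ i = 0"
  then show "vnorm v = 0" unfolding vnorm_def by simp
qed

definition opset :: "complex mat \<Rightarrow> real set" where
  "opset A = {vnorm (A *\<^sub>v v) | v. v \<in> carrier_vec (dim_col A) \<and> vnorm v \<le> 1}"

lemma opnorm_opset: "opnorm A = Sup (opset A)" unfolding opnorm_def opset_def by simp

lemma opset_bdd: "bdd_above (opset A)"
proof -
  define R where "R i = (\<Sum>j<dim_col A. cmod (A $$ (i,j)))" for i
  have "vnorm (A *\<^sub>v v) \<le> sqrt (\<Sum>i<dim_row A. (R i)^2)"
    if v: "v \<in> carrier_vec (dim_col A)" "vnorm v \<le> 1" for v
  proof -
    have "cmod ((A *\<^sub>v v) $ i) \<le> R i" if i: "i < dim_row A" for i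
    proof -
      have "cmod ((A *\<^sub>v v) $ i) = cmod (\<Sum>j<dim_col A. A $$ (i,j) * v $ j)"
        using v i by (subst mult_vec_entry) auto
      also have "\<dots> \<le> (\<Sum>j<dim_col A. cmod (A $$ (i,j) * v $ j))" by (rule norm_sum)
      also have "\<dots> \<le> (\<Sum>j<dim_col A. cmod (A $$ (i,j)))"
      proof (rule sum_mono)
        fix j assume j: "j \<in> {..<dim_col A}"
        have "cmod (v $ j) \<le> 1" using comp_le_vnorm[of j v] v j by auto
        then show "cmod (A $$ (i,j) * v $ j) \<le> cmod (A $$ (i,j))"
          by (simp add: norm_mult mult_left_le)
      qed
      finally show ?thesis unfolding R_def .
    qed
    then have "(\<Sum>i<dim_row A. (cmod ((A *\<^sub>v v) $ i))^2) \<le> (\<Sum>i<dim_row A. (R i)^2)"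
      by (intro sum_mono power_mono) auto
    then show ?thesis unfolding vnorm_def by simp
  qed
  then show ?thesis unfolding opset_def bdd_above_def by blast
qed

lemma opnorm_ub: "v \<in> carrier_vec (dim_col A) \<Longrightarrow> vnorm v \<le> 1 \<Longrightarrow> vnorm (A *\<^sub>v v) \<le> opnorm A"
  unfolding opnorm_opset by (rule cSup_upper[OF _ opset_bdd]) (auto simp: opset_def)

lemma opnorm_ge0: "opnorm A \<ge> 0"
proof -
  have "vnorm (A *\<^sub>v 0\<^sub>v (dim_col A)) \<le> opnorm A"
    by (rule opnorm_ub) (auto simp: vnorm_def)
  then show ?thesis using vnorm_ge0 order_trans by blast
qed

lemma opnorm_mult: assumes v: "v \<in> carrier_vec (dim_col A)"
  shows "vnorm (A *\<^sub>v v) \<le> opnorm A * vnorm v"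
proof (cases "vnorm v = 0")
  case True
  then have "\<forall>i<dim_vec v. v $ i = 0" using vnorm_zero_iff by blast
  then have "v = 0\<^sub>v (dim_col A)" using v by (auto intro!: eq_vecI)
  then have "A *\<^sub>v v = 0\<^sub>v (dim_row A)" by auto
  then show ?thesis using True by (simp add: vnorm_def)
next
  case False
  then have pos: "vnorm v > 0" using vnorm_ge0[of v] by linarith
  define u where "u = (1 / vnorm v) \<cdot>\<^sub>v v"
  have u: "u \<in> carrier_vec (dim_col A)" using v unfolding u_def by simp
  have "vnorm u = 1" unfolding u_def vnorm_smult using pos by (simp add: norm_divide)
  then have "vnorm (A *\<^sub>v u) \<le> opnorm A" using opnorm_ub u by simp
  moreover have "A *\<^sub>v u = (1 / vnorm v) \<cdot>\<^sub>v (A *\<^sub>v v)"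
    unfolding u_def using v by (intro mult_mat_vec[of _ "dim_row A" "dim_col A"]) auto
  ultimately have "vnorm ((1 / vnorm v) \<cdot>\<^sub>v (A *\<^sub>v v)) \<le> opnorm A" by simp
  then have "vnorm (A *\<^sub>v v) / vnorm v \<le> opnorm A"
    unfolding vnorm_smult using pos by (simp add: norm_divide)
  then show ?thesis using pos by (simp add: divide_le_eq mult.commute)
qed

lemma opnorm_le: assumes "C \<ge> 0" "\<And>v. v \<in> carrier_vec (dim_col A) \<Longrightarrow> vnorm (A *\<^sub>v v) \<le> C * vnorm v"
  shows "opnorm A \<le> C"
  unfolding opnorm_opset
proof (rule cSup_least)
  show "opset A \<noteq> {}" unfolding opset_def by (auto intro!: exI[of _ "0\<^sub>v (dim_col A)"] simp: vnorm_def)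
next
  fix x assume "x \<in> opset A"
  then obtain v where v: "v \<in> carrier_vec (dim_col A)" "vnorm v \<le> 1" "x = vnorm (A *\<^sub>v v)"
    unfolding opset_def by auto
  have "x \<le> C * vnorm v" using assms(2)[OF v(1)] v(3) by simp
  also have "\<dots> \<le> C" using v(2) assms(1) by (simp add: mult_left_le)
  finally show "x \<le> C" .
qed

lemma opnorm_lower: assumes "c \<ge> 0" "\<And>v. v \<in> carrier_vec (dim_col A) \<Longrightarrow> vnorm v \<le> 1 \<Longrightarrow> c * vnorm (A *\<^sub>v v) \<le> B"
  shows "c * opnorm A \<le> B"
proof (cases "c = 0")
  case True
  have "c * vnorm (A *\<^sub>v 0\<^sub>v (dim_col A)) \<le> B" by (rule assms(2)) (auto simp: vnorm_def)
  then show ?thesis using True by simp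
next
  case False
  then have c: "c > 0" using assms(1) by simp
  have "opnorm A \<le> B / c" unfolding opnorm_opset
  proof (rule cSup_least)
    show "opset A \<noteq> {}" unfolding opset_def by (auto intro!: exI[of _ "0\<^sub>v (dim_col A)"] simp: vnorm_def)
  next
    fix x assume "x \<in> opset A"
    then obtain v where v: "v \<in> carrier_vec (dim_col A)" "vnorm v \<le> 1" "x = vnorm (A *\<^sub>v v)"
      unfolding opset_def by auto
    show "x \<le> B / c" using assms(2)[OF v(1,2)] v(3) c by (simp add: le_divide_eq mult.commute)
  qed
  then show ?thesis using c by (simp add: le_divide_eq mult.commute)
qed

lemma opnorm_zero: "opnorm (0\<^sub>m n m) = 0"
proof -
  have "opnorm (0\<^sub>m n m) \<le> 0"
    by (rule opnorm_le) (auto simp: vnorm_def)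
  then show ?thesis using opnorm_ge0[of "0\<^sub>m n m"] by simp
qed

lemma opnorm_one: "opnorm (1\<^sub>m n) \<le> 1"
  by (rule opnorm_le) auto



definition lset :: "nat \<Rightarrow> nat \<Rightarrow> nat \<Rightarrow> ((nat \<times> nat) + nat) set" where
  "lset G p R = Inl ` ({..<G} \<times> {..<p}) \<union> Inr ` {..<R}"

definition gent :: "(nat \<Rightarrow> (nat \<times> nat) + nat) \<Rightarrow> (nat \<Rightarrow> complex) \<Rightarrow> complex mat \<Rightarrow> nat \<Rightarrow> nat \<Rightarrow> complex" where
  "gent L c x s t = (case L s of Inl (k,a) \<Rightarrow> (case L t of Inl (k',b) \<Rightarrow> if k = k' then c k * x $$ (a,b) else 0 | Inr _ \<Rightarrow> 0) | Inr _ \<Rightarrow> 0)"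

definition grp :: "(nat \<Rightarrow> (nat \<times> nat) + nat) \<Rightarrow> nat \<Rightarrow> (nat \<Rightarrow> complex) \<Rightarrow> complex mat \<Rightarrow> complex mat" where
  "grp L N c x = mat N N (\<lambda>(s,t). gent L c x s t)"

lemma grp_carrier[simp]: "grp L N c x \<in> carrier_mat N N" "dim_row (grp L N c x) = N" "dim_col (grp L N c x) = N"
  by (auto simp: grp_def)

lemma grp_index[simp]: "s < N \<Longrightarrow> t < N \<Longrightarrow> grp L N c x $$ (s,t) = gent L c x s t"
  by (simp add: grp_def)

lemma sum_lset: "(\<Sum>z\<in>lset G p R. H z) = (\<Sum>k<G. \<Sum>a<p. H (Inl (k,a))) + (\<Sum>l<R. H (Inr l))"
proof -
  have d: "Inl ` ({..<G} \<times> {..<p}) \<inter> Inr ` {..<R} = {}" by auto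
  have "(\<Sum>z\<in>lset G p R. H z) = (\<Sum>z\<in>Inl ` ({..<G} \<times> {..<p}). H z) + (\<Sum>z\<in>Inr ` {..<R}. H z)"
    unfolding lset_def by (rule sum.union_disjoint) (use d in auto)
  also have "(\<Sum>z\<in>Inl ` ({..<G} \<times> {..<p}). H z) = (\<Sum>z\<in>{..<G} \<times> {..<p}. H (Inl z))"
    by (subst sum.reindex) (auto simp: inj_on_def)
  also have "\<dots> = (\<Sum>k<G. \<Sum>a<p. H (Inl (k,a)))"
    by (subst sum.cartesian_product) simp
  also have "(\<Sum>z\<in>Inr ` {..<R}. H z) = (\<Sum>l<R. H (Inr l))"
    by (subst sum.reindex) (auto simp: inj_on_def)
  finally show ?thesis .
qed

context
  fixes L :: "nat \<Rightarrow> (nat \<times> nat) + nat" and N G p R :: nat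
  assumes lay: "bij_betw L {..<N} (lset G p R)"
begin

definition "PP = inv_into {..<N} L"

lemma PP_bij: "bij_betw PP (lset G p R) {..<N}"
  unfolding PP_def by (rule bij_betw_inv_into[OF lay])

lemma L_PP: "z \<in> lset G p R \<Longrightarrow> L (PP z) = z"
  unfolding PP_def by (rule bij_betw_inv_into_right[OF lay])

lemma PP_L: "s < N \<Longrightarrow> PP (L s) = s"
  unfolding PP_def using bij_betw_inv_into_left[OF lay] by simp

lemma PP_lt: "z \<in> lset G p R \<Longrightarrow> PP z < N"
  using PP_bij bij_betwE by fastforce

lemma L_in: "s < N \<Longrightarrow> L s \<in> lset G p R"
  using lay bij_betwE by fastforce

lemma L_Inl: "s < N \<Longrightarrow> L s = Inl (k,a) \<Longrightarrow> k < G \<and> a < p"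
  using L_in[of s] unfolding lset_def by auto

lemma L_Inr: "s < N \<Longrightarrow> L s = Inr l \<Longrightarrow> l < R"
  using L_in[of s] unfolding lset_def by auto

lemma PP_Inl_lt: "k < G \<Longrightarrow> a < p \<Longrightarrow> PP (Inl (k,a)) < N"
  by (rule PP_lt) (auto simp: lset_def)

lemma L_PP_Inl: "k < G \<Longrightarrow> a < p \<Longrightarrow> L (PP (Inl (k,a))) = Inl (k,a)"
  by (rule L_PP) (auto simp: lset_def)

lemma L_PP_Inr: "l < R \<Longrightarrow> L (PP (Inr l)) = Inr l"
  by (rule L_PP) (auto simp: lset_def)

lemma sum_split: "(\<Sum>t<N. H t) = (\<Sum>k<G. \<Sum>a<p. H (PP (Inl (k,a)))) + (\<Sum>l<R. H (PP (Inr l)))"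
proof -
  have "(\<Sum>z\<in>lset G p R. H (PP z)) = (\<Sum>t<N. H t)"
    by (rule sum.reindex_bij_betw[OF PP_bij])
  then show ?thesis using sum_lset[of "\<lambda>z. H (PP z)"] by simp
qed

lemma sum_L: "(\<Sum>t<N. F (L t)) = (\<Sum>k<G. \<Sum>a<p. F (Inl (k,a))) + (\<Sum>l<R. F (Inr l))"
  using sum_split[of "\<lambda>t. F (L t)"] by (simp add: L_PP_Inl L_PP_Inr)

lemma row_sum:
  assumes s: "s < N" "L s = Inl (k,a)"
  shows "(\<Sum>t<N. gent L c x s t * g t) = c k * (\<Sum>b<p. x $$ (a,b) * g (PP (Inl (k,b))))"
proof -
  have k: "k < G" using L_Inl[OF s] by simp
  have "(\<Sum>t<N. gent L c x s t * g t) =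
     (\<Sum>k'<G. \<Sum>b<p. (if k = k' then c k * x $$ (a,b) else 0) * g (PP (Inl (k',b))))"
    by (subst sum_split) (simp add: gent_def s L_PP_Inl L_PP_Inr)
  also have "\<dots> = (\<Sum>k'<G. if k = k' then (\<Sum>b<p. c k * x $$ (a,b) * g (PP (Inl (k',b)))) else 0)"
    by (rule sum.cong) auto
  also have "\<dots> = (\<Sum>b<p. c k * x $$ (a,b) * g (PP (Inl (k,b))))"
    using k by (simp add: sum.delta)
  finally show ?thesis by (simp add: sum_distrib_left mult.assoc)
qed


definition uvec :: "complex Matrix.vec \<Rightarrow> nat \<Rightarrow> complex Matrix.vec" where "uvec v k = vec p (\<lambda>b. v $ PP (Inl (k,b)))"

lemma grp_mv_Inl:
  assumes x: "x \<in> carrier_mat p p" and v: "v \<in> carrier_vec N" and s: "s < N" "L s = Inl (k,a)"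
  shows "(grp L N c x *\<^sub>v v) $ s = c k * (x *\<^sub>v uvec v k) $ a"
proof -
  have a: "a < p" using L_Inl[OF s] by simp
  have "(grp L N c x *\<^sub>v v) $ s = (\<Sum>t<N. gent L c x s t * v $ t)"
    using v s by (subst mult_vec_entry) auto
  also have "\<dots> = c k * (\<Sum>b<p. x $$ (a,b) * v $ PP (Inl (k,b)))" by (rule row_sum[OF s])
  also have "(\<Sum>b<p. x $$ (a,b) * v $ PP (Inl (k,b))) = (x *\<^sub>v uvec v k) $ a"
    using x a by (subst mult_vec_entry) (auto simp: uvec_def)
  finally show ?thesis .
qed

lemma grp_mv_Inr:
  assumes v: "v \<in> carrier_vec N" and s: "s < N" "L s = Inr l"
  shows "(grp L N c x *\<^sub>v v) $ s = 0"
proof -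
  have "(grp L N c x *\<^sub>v v) $ s = (\<Sum>t<N. gent L c x s t * v $ t)"
    using v s by (subst mult_vec_entry) auto
  also have "\<dots> = 0" using s by (simp add: gent_def)
  finally show ?thesis .
qed

lemma vnorm_sq_grp:
  assumes x: "x \<in> carrier_mat p p" and v: "v \<in> carrier_vec N"
  shows "(vnorm (grp L N c x *\<^sub>v v))^2 = (\<Sum>k<G. (cmod (c k))^2 * (vnorm (x *\<^sub>v uvec v k))^2)"
proof -
  have "(vnorm (grp L N c x *\<^sub>v v))^2 = (\<Sum>s<N. (cmod ((grp L N c x *\<^sub>v v) $ s))^2)"
    by (simp add: vnorm_sq)
  also have "\<dots> = (\<Sum>k<G. \<Sum>a<p. (cmod ((grp L N c x *\<^sub>v v) $ PP (Inl (k,a))))^2)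
      + (\<Sum>l<R. (cmod ((grp L N c x *\<^sub>v v) $ PP (Inr l)))^2)"
    by (rule sum_split)
  also have "(\<Sum>l<R. (cmod ((grp L N c x *\<^sub>v v) $ PP (Inr l)))^2) = 0"
  proof (rule sum.neutral, intro ballI)
    fix l assume "l \<in> {..<R}"
    then have l: "l < R" by simp
    have m: "Inr l \<in> lset G p R" using l by (auto simp: lset_def)
    have "(grp L N c x *\<^sub>v v) $ PP (Inr l) = 0"
      by (rule grp_mv_Inr[OF v PP_lt[OF m] L_PP_Inr[OF l]])
    then show "(cmod ((grp L N c x *\<^sub>v v) $ PP (Inr l)))^2 = 0" by simp
  qed
  also have "(\<Sum>k<G. \<Sum>a<p. (cmod ((grp L N c x *\<^sub>v v) $ PP (Inl (k,a))))^2)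
      = (\<Sum>k<G. \<Sum>a<p. (cmod (c k))^2 * (cmod ((x *\<^sub>v uvec v k) $ a))^2)"
  proof (intro sum.cong refl)
    fix k a assume "k \<in> {..<G}" "a \<in> {..<p}"
    then have ka: "k < G" "a < p" by auto
    have "(grp L N c x *\<^sub>v v) $ PP (Inl (k,a)) = c k * (x *\<^sub>v uvec v k) $ a"
      by (rule grp_mv_Inl[OF x v PP_Inl_lt[OF ka] L_PP_Inl[OF ka]])
    then show "(cmod ((grp L N c x *\<^sub>v v) $ PP (Inl (k,a))))^2 = (cmod (c k))^2 * (cmod ((x *\<^sub>v uvec v k) $ a))^2"
      by (simp add: norm_mult power_mult_distrib)
  qed
  also have "\<dots> = (\<Sum>k<G. (cmod (c k))^2 * (vnorm (x *\<^sub>v uvec v k))^2)"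
    using x by (simp add: vnorm_sq sum_distrib_left)
  finally show ?thesis by simp
qed

lemma uvec_sum:
  assumes v: "v \<in> carrier_vec N"
  shows "(\<Sum>k<G. (vnorm (uvec v k))^2) \<le> (vnorm v)^2"
proof -
  have "(vnorm v)^2 = (\<Sum>t<N. (cmod (v $ t))^2)" using v by (simp add: vnorm_sq)
  also have "\<dots> = (\<Sum>k<G. \<Sum>a<p. (cmod (v $ PP (Inl (k,a))))^2) + (\<Sum>l<R. (cmod (v $ PP (Inr l)))^2)"
    by (rule sum_split)
  also have "\<dots> \<ge> (\<Sum>k<G. \<Sum>a<p. (cmod (v $ PP (Inl (k,a))))^2)"
    by (simp add: sum_nonneg)
  also have "(\<Sum>k<G. \<Sum>a<p. (cmod (v $ PP (Inl (k,a))))^2) = (\<Sum>k<G. (vnorm (uvec v k))^2)"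
    by (simp add: vnorm_sq uvec_def)
  finally show ?thesis by simp
qed

lemma grp_opnorm:
  assumes x: "x \<in> carrier_mat p p" and B: "B \<ge> 0" and c: "\<And>k. k < G \<Longrightarrow> cmod (c k) \<le> B"
  shows "opnorm (grp L N c x) \<le> B * opnorm x"
proof (rule opnorm_le)
  show "0 \<le> B * opnorm x" using B opnorm_ge0 by simp
next
  fix v :: "complex Matrix.vec" assume "v \<in> carrier_vec (dim_col (grp L N c x))"
  then have v: "v \<in> carrier_vec N" by simp
  have "(vnorm (grp L N c x *\<^sub>v v))^2 = (\<Sum>k<G. (cmod (c k))^2 * (vnorm (x *\<^sub>v uvec v k))^2)"
    by (rule vnorm_sq_grp[OF x v])
  also have "\<dots> \<le> (\<Sum>k<G. B^2 * (opnorm x * vnorm (uvec v k))^2)"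
  proof (rule sum_mono)
    fix k assume k: "k \<in> {..<G}"
    have u: "uvec v k \<in> carrier_vec (dim_col x)" using x by (simp add: uvec_def)
    have "(cmod (c k))^2 \<le> B^2" using c[of k] k by (intro power_mono) auto
    moreover have "(vnorm (x *\<^sub>v uvec v k))^2 \<le> (opnorm x * vnorm (uvec v k))^2"
      by (rule power_mono[OF opnorm_mult[OF u] vnorm_ge0])
    ultimately show "(cmod (c k))^2 * (vnorm (x *\<^sub>v uvec v k))^2 \<le> B^2 * (opnorm x * vnorm (uvec v k))^2"
      by (intro mult_mono) auto
  qed
  also have "\<dots> = (\<Sum>k<G. (B * opnorm x)^2 * (vnorm (uvec v k))^2)"
    by (intro sum.cong refl) (simp add: power_mult_distrib)
  also have "\<dots> = (B * opnorm x)^2 * (\<Sum>k<G. (vnorm (uvec v k))^2)"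
    by (simp add: sum_distrib_left)
  also have "\<dots> \<le> (B * opnorm x)^2 * (vnorm v)^2"
    by (rule mult_left_mono[OF uvec_sum[OF v]]) simp
  also have "\<dots> = (B * opnorm x * vnorm v)^2" by (simp add: power_mult_distrib)
  finally have "(vnorm (grp L N c x *\<^sub>v v))^2 \<le> (B * opnorm x * vnorm v)^2" .
  moreover have nn: "0 \<le> B * opnorm x * vnorm v" using B opnorm_ge0[of x] vnorm_ge0[of v] by simp
  ultimately show "vnorm (grp L N c x *\<^sub>v v) \<le> B * opnorm x * vnorm v"
    by (rule power2_le_imp_le)
qed


lemma grp_opnorm_lower:
  assumes x: "x \<in> carrier_mat p p" and G: "G > 0"
  shows "cmod (c 0) * opnorm x \<le> opnorm (grp L N c x)"
proof (rule opnorm_lower)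
  fix v :: "complex Matrix.vec" assume "v \<in> carrier_vec (dim_col x)" "vnorm v \<le> 1"
  then have v: "v \<in> carrier_vec p" "vnorm v \<le> 1" using x by auto
  define u where "u = vec N (\<lambda>t. case L t of Inl (k,b) \<Rightarrow> if k = 0 then v $ b else 0 | Inr _ \<Rightarrow> 0)"
  have u: "u \<in> carrier_vec N" unfolding u_def by simp
  have uv: "uvec u k = (if k = 0 then v else 0\<^sub>v p)" if k: "k < G" for k
    using v k by (auto intro!: eq_vecI simp: uvec_def u_def PP_Inl_lt L_PP_Inl)
  have "(vnorm (grp L N c x *\<^sub>v u))^2 = (\<Sum>k<G. (cmod (c k))^2 * (vnorm (x *\<^sub>v uvec u k))^2)"
    by (rule vnorm_sq_grp[OF x u])
  also have "\<dots> = (\<Sum>k<G. if k = 0 then (cmod (c 0))^2 * (vnorm (x *\<^sub>v v))^2 else 0)"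
  proof (intro sum.cong refl)
    fix k assume "k \<in> {..<G}"
    then show "(cmod (c k))^2 * (vnorm (x *\<^sub>v uvec u k))^2 = (if k = 0 then (cmod (c 0))^2 * (vnorm (x *\<^sub>v v))^2 else 0)"
      using uv[of k] x by (auto simp: vnorm_def)
  qed
  also have "\<dots> = (cmod (c 0) * vnorm (x *\<^sub>v v))^2" using G by (simp add: power_mult_distrib)
  finally have e1: "vnorm (grp L N c x *\<^sub>v u) = cmod (c 0) * vnorm (x *\<^sub>v v)"
    using vnorm_ge0 by (metis norm_ge_zero power2_eq_iff_nonneg zero_le_mult_iff)
  have "(vnorm u)^2 = (\<Sum>t<N. (cmod (u $ t))^2)" using u by (simp add: vnorm_sq)
  also have "\<dots> = (\<Sum>t<N. (\<lambda>z. case z of Inl (k,b) \<Rightarrow> if k = 0 then (cmod (v $ b))^2 else 0 | Inr _ \<Rightarrow> 0) (L t))"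
    by (intro sum.cong refl) (auto simp: u_def split: sum.splits)
  also have "\<dots> = (\<Sum>k<G. \<Sum>a<p. if k = 0 then (cmod (v $ a))^2 else 0)"
    by (subst sum_L) simp
  also have "\<dots> = (\<Sum>k<G. if k = 0 then (\<Sum>a<p. (cmod (v $ a))^2) else 0)"
    by (intro sum.cong refl) auto
  also have "\<dots> = (\<Sum>a<p. (cmod (v $ a))^2)"
    using G by (simp add: sum.delta)
  also have "\<dots> = (vnorm v)^2" using v by (simp add: vnorm_sq)
  finally have "(vnorm u)^2 = (vnorm v)^2" .
  then have "vnorm u = vnorm v" using vnorm_ge0 by (metis power2_eq_iff_nonneg)
  then have "vnorm u \<le> 1" using v by simp
  then have "vnorm (grp L N c x *\<^sub>v u) \<le> opnorm (grp L N c x)"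
    by (intro opnorm_ub) (use u in auto)
  then show "cmod (c 0) * vnorm (x *\<^sub>v v) \<le> opnorm (grp L N c x)" using e1 by simp
qed simp

lemma grp_mult:
  assumes x: "x \<in> carrier_mat p p" and y: "y \<in> carrier_mat p p"
  shows "grp L N c x * grp L N d y = grp L N (\<lambda>k. c k * d k) (x * y)"
proof (rule eq_matI)
  fix s t assume "s < dim_row (grp L N (\<lambda>k. c k * d k) (x * y))" "t < dim_col (grp L N (\<lambda>k. c k * d k) (x * y))"
  then have st: "s < N" "t < N" by auto
  have "(grp L N c x * grp L N d y) $$ (s,t) = (\<Sum>u<N. gent L c x s u * gent L d y u t)"
    using st by (subst mult_entry) auto
  also have "\<dots> = gent L (\<lambda>k. c k * d k) (x * y) s t"
  proof (cases "L s")
    case (Inl ka)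
    then obtain k a where s: "L s = Inl (k,a)" by (cases ka) auto
    have ka: "k < G" "a < p" using L_Inl[OF st(1) s] by auto
    have "(\<Sum>u<N. gent L c x s u * gent L d y u t) = c k * (\<Sum>b<p. x $$ (a,b) * gent L d y (PP (Inl (k,b))) t)"
      by (rule row_sum[OF st(1) s])
    also have "\<dots> = gent L (\<lambda>k. c k * d k) (x * y) s t"
    proof (cases "L t")
      case (Inl kb)
      then obtain k' b' where t: "L t = Inl (k',b')" by (cases kb) auto
      have kb: "k' < G" "b' < p" using L_Inl[OF st(2) t] by auto
      have "(\<Sum>b<p. x $$ (a,b) * gent L d y (PP (Inl (k,b))) t) = (\<Sum>b<p. x $$ (a,b) * (if k = k' then d k * y $$ (b,b') else 0))"
        by (intro sum.cong refl) (auto simp: gent_def L_PP_Inl ka t)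
      also have "\<dots> = (if k = k' then d k * (x * y) $$ (a,b') else 0)"
      proof -
        have "(x * y) $$ (a,b') = (\<Sum>b<p. x $$ (a,b) * y $$ (b,b'))"
          using x y ka kb by (subst mult_entry) auto
        then show ?thesis by (auto simp: sum_distrib_left mult_ac)
      qed
      finally show ?thesis using s t by (simp add: gent_def)
    next
      case (Inr l)
      then show ?thesis using s by (simp add: gent_def L_PP_Inl ka)
    qed
    finally show ?thesis .
  next
    case (Inr l)
    then show ?thesis by (simp add: gent_def)
  qed
  also have "\<dots> = grp L N (\<lambda>k. c k * d k) (x * y) $$ (s,t)" using st by simp
  finally show "(grp L N c x * grp L N d y) $$ (s,t) = grp L N (\<lambda>k. c k * d k) (x * y) $$ (s,t)" .
qed auto

lemma grp_lin:
  assumes x: "x \<in> carrier_mat p p" and y: "y \<in> carrier_mat p p"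
  shows "grp L N c (a \<cdot>\<^sub>m x + y) = a \<cdot>\<^sub>m grp L N c x + grp L N c y"
proof (rule eq_matI)
  fix s t assume "s < dim_row (a \<cdot>\<^sub>m grp L N c x + grp L N c y)" "t < dim_col (a \<cdot>\<^sub>m grp L N c x + grp L N c y)"
  then have st: "s < N" "t < N" by auto
  show "grp L N c (a \<cdot>\<^sub>m x + y) $$ (s,t) = (a \<cdot>\<^sub>m grp L N c x + grp L N c y) $$ (s,t)"
    using st x y L_Inl[OF st(1)] L_Inl[OF st(2)]
    by (auto simp: gent_def algebra_simps split: sum.splits prod.splits)
qed auto

lemma grp_zero: "grp L N c (0\<^sub>m p p) = 0\<^sub>m N N"
  by (rule eq_matI) (use L_Inl in \<open>auto simp: gent_def split: sum.splits prod.splits\<close>)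

lemma grp_one: "grp L N c (1\<^sub>m p) = diag_of N (\<lambda>s. case L s of Inl (k,a) \<Rightarrow> c k | Inr _ \<Rightarrow> 0)"
proof (rule eq_matI)
  fix s t assume "s < dim_row (diag_of N (\<lambda>s. case L s of Inl (k,a) \<Rightarrow> c k | Inr _ \<Rightarrow> 0))"
    "t < dim_col (diag_of N (\<lambda>s. case L s of Inl (k,a) \<Rightarrow> c k | Inr _ \<Rightarrow> 0))"
  then have st: "s < N" "t < N" by (auto simp: diag_of_def)
  have inj: "L s = L t \<longleftrightarrow> s = t" using st PP_L by metis
  show "grp L N c (1\<^sub>m p) $$ (s,t) = diag_of N (\<lambda>s. case L s of Inl (k,a) \<Rightarrow> c k | Inr _ \<Rightarrow> 0) $$ (s,t)"
    using st L_Inl[OF st(1)] L_Inl[OF st(2)] inj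
    by (auto simp: gent_def diag_of_def split: sum.splits prod.splits)
qed (auto simp: diag_of_def)


definition cent :: "(nat \<Rightarrow> real) \<Rightarrow> complex mat \<Rightarrow> nat \<Rightarrow> nat \<Rightarrow> nat \<Rightarrow> nat \<Rightarrow> complex" where
  "cent w B l u i s = (case L u of Inl (k,c) \<Rightarrow> (case L s of Inl (k',a) \<Rightarrow>
      if k = k' then complex_of_real (sqrt (w k)) * B $$ (l*p+c, i*p+a) else 0 | Inr _ \<Rightarrow> 0) | Inr _ \<Rightarrow> 0)"

lemma inner_sum:
  assumes w: "\<And>k. k < G \<Longrightarrow> w k \<ge> 0" and s: "s < N" and t: "t < N"
  shows "(\<Sum>u<N. cnj (cent w B l u i s) * cent w B l u j t) =
    (case L s of Inl (k,a) \<Rightarrow> (case L t of Inl (k2,b) \<Rightarrow> if k = k2 then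
       complex_of_real (w k) * (\<Sum>c<p. cnj (B $$ (l*p+c, i*p+a)) * B $$ (l*p+c, j*p+b)) else 0 | Inr _ \<Rightarrow> 0) | Inr _ \<Rightarrow> 0)"
proof (cases "L s")
  case (Inl ka)
  then obtain k a where ls: "L s = Inl (k,a)" by (cases ka) auto
  have ka: "k < G" "a < p" using L_Inl[OF s ls] by auto
  show ?thesis
  proof (cases "L t")
    case (Inl kb)
    then obtain k2 b where lt: "L t = Inl (k2,b)" by (cases kb) auto
    have "(\<Sum>u<N. cnj (cent w B l u i s) * cent w B l u j t) =
      (\<Sum>k'<G. \<Sum>c<p. cnj (cent w B l (PP (Inl (k',c))) i s) * cent w B l (PP (Inl (k',c))) j t)
      + (\<Sum>r<R. cnj (cent w B l (PP (Inr r)) i s) * cent w B l (PP (Inr r)) j t)"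
      by (rule sum_split)
    also have "(\<Sum>r<R. cnj (cent w B l (PP (Inr r)) i s) * cent w B l (PP (Inr r)) j t) = 0"
    proof (rule sum.neutral, intro ballI)
      fix r assume "r \<in> {..<R}"
      then have "L (PP (Inr r)) = Inr r" by (intro L_PP_Inr) simp
      then show "cnj (cent w B l (PP (Inr r)) i s) * cent w B l (PP (Inr r)) j t = 0" by (simp add: cent_def)
    qed
    also have "(\<Sum>k'<G. \<Sum>c<p. cnj (cent w B l (PP (Inl (k',c))) i s) * cent w B l (PP (Inl (k',c))) j t)
      = (\<Sum>k'<G. if k' = k then (if k = k2 then
          (\<Sum>c<p. complex_of_real (w k) * (cnj (B $$ (l*p+c, i*p+a)) * B $$ (l*p+c, j*p+b))) else 0) else 0)"
    proof (intro sum.cong refl)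
      fix k' assume k': "k' \<in> {..<G}"
      have sq: "complex_of_real (sqrt (w k)) * complex_of_real (sqrt (w k)) = complex_of_real (w k)"
      proof -
        have "sqrt (w k) * sqrt (w k) = w k" using w[OF ka(1)] by simp
        then show ?thesis by (metis of_real_mult)
      qed
      show "(\<Sum>c<p. cnj (cent w B l (PP (Inl (k',c))) i s) * cent w B l (PP (Inl (k',c))) j t) =
        (if k' = k then (if k = k2 then
          (\<Sum>c<p. complex_of_real (w k) * (cnj (B $$ (l*p+c, i*p+a)) * B $$ (l*p+c, j*p+b))) else 0) else 0)"
      proof (cases "k' = k \<and> k = k2")
        case True
        have e1: "cent w B l (PP (Inl (k,c))) i s = complex_of_real (sqrt (w k)) * B $$ (l*p+c, i*p+a)"
          if "c < p" for c using that ka ls by (simp add: cent_def L_PP_Inl)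
        have e2: "cent w B l (PP (Inl (k,c))) j t = complex_of_real (sqrt (w k)) * B $$ (l*p+c, j*p+b)"
          if "c < p" for c using that ka ls lt True by (simp add: cent_def L_PP_Inl)
        have e3: "cnj (complex_of_real r * z1) * (complex_of_real r * z2) = complex_of_real r * complex_of_real r * (cnj z1 * z2)"
          for r z1 z2 by (simp add: mult_ac)
        have "(\<Sum>c<p. cnj (cent w B l (PP (Inl (k',c))) i s) * cent w B l (PP (Inl (k',c))) j t)
           = (\<Sum>c<p. complex_of_real (w k) * (cnj (B $$ (l*p+c, i*p+a)) * B $$ (l*p+c, j*p+b)))"
        proof (intro sum.cong refl)
          fix c assume c: "c \<in> {..<p}"
          show "cnj (cent w B l (PP (Inl (k',c))) i s) * cent w B l (PP (Inl (k',c))) j t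
             = complex_of_real (w k) * (cnj (B $$ (l*p+c, i*p+a)) * B $$ (l*p+c, j*p+b))"
          proof -
            have kk: "k' = k" using True by simp
            have c': "c < p" using c by simp
            show ?thesis unfolding kk e1[OF c'] e2[OF c'] e3 sq ..
          qed
        qed
        then show ?thesis using True by simp
      next
        case False
        have "cnj (cent w B l (PP (Inl (k',c))) i s) * cent w B l (PP (Inl (k',c))) j t = 0" if c: "c < p" for c
        proof (cases "k' = k")
          case True
          then have "k \<noteq> k2" using False by simp
          then show ?thesis using True c ka ls lt k' by (simp add: cent_def L_PP_Inl)
        next
          case False
          then show ?thesis using c ka ls lt k' by (simp add: cent_def L_PP_Inl)
        qed
        then have "(\<Sum>c<p. cnj (cent w B l (PP (Inl (k',c))) i s) * cent w B l (PP (Inl (k',c))) j t) = 0"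
          by (intro sum.neutral) simp
        then show ?thesis using False by auto
      qed
    qed
    also have "\<dots> = (if k = k2 then
          (\<Sum>c<p. complex_of_real (w k) * (cnj (B $$ (l*p+c, i*p+a)) * B $$ (l*p+c, j*p+b))) else 0)"
      using ka by (simp add: sum.delta')
    finally show ?thesis using ls lt by (simp add: sum_distrib_left)
  next
    case (Inr r)
    then show ?thesis using ls by (simp add: cent_def split: sum.splits prod.splits)
  qed
next
  case (Inr r)
  then show ?thesis by (simp add: cent_def split: sum.splits prod.splits)
qed


lemma grp_cp:
  assumes X: "\<forall>i<n. \<forall>j<n. X i j \<in> carrier_mat p p" and ps: "psd (blockmat n p X)"
    and w: "\<And>k. k < G \<Longrightarrow> w k \<ge> 0" and cw: "\<And>k. k < G \<Longrightarrow> c k = complex_of_real (w k)"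
  shows "psd (blockmat n N (\<lambda>i j. grp L N c (X i j)))"
proof -
  have dimb: "dim_row (blockmat n p X) = n * p" by (simp add: blockmat_def)
  obtain B where B: "B \<in> carrier_mat (n*p) (n*p)" and eq: "blockmat n p X = mat_adjoint B * B"
    using ps unfolding psd_def dimb by auto
  have lt: "i * m + a < n * m" if "i < n" "a < m" for i a m :: nat
  proof -
    have "i * m + a < i * m + m" using that by simp
    also have "\<dots> = (i + 1) * m" by simp
    also have "\<dots> \<le> n * m" using that by (intro mult_right_mono) auto
    finally show ?thesis .
  qed
  have Xent: "X i j $$ (a,b) = (\<Sum>l<n. \<Sum>c'<p. cnj (B $$ (l*p+c', i*p+a)) * B $$ (l*p+c', j*p+b))"
    if ij: "i < n" "j < n" "a < p" "b < p" for i j a b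
  proof -
    have "X i j $$ (a,b) = blockmat n p X $$ (i*p+a, j*p+b)"
      using ij lt[of i a p] lt[of j b p] by (simp add: blockmat_def)
    also have "\<dots> = (mat_adjoint B * B) $$ (i*p+a, j*p+b)" using eq by simp
    also have "\<dots> = (\<Sum>r<n*p. cnj (B $$ (r, i*p+a)) * B $$ (r, j*p+b))"
      using B ij lt[of i a p] lt[of j b p] by (subst mult_entry) (auto simp: adjoint_alt)
    also have "\<dots> = (\<Sum>l<n. \<Sum>c'<p. cnj (B $$ (c' + l*p, i*p+a)) * B $$ (c' + l*p, j*p+b))"
      by (rule sum_mult_product)
    finally show ?thesis by (simp add: add.commute)
  qed
  define C where "C = mat (n*N) (n*N) (\<lambda>(r,q). cent w B (r div N) (r mod N) (q div N) (q mod N))"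
  have C: "C \<in> carrier_mat (n*N) (n*N)" unfolding C_def by simp
  have "blockmat n N (\<lambda>i j. grp L N c (X i j)) = mat_adjoint C * C"
  proof (rule eq_matI)
    fix r1 r2 assume "r1 < dim_row (mat_adjoint C * C)" "r2 < dim_col (mat_adjoint C * C)"
    then have r: "r1 < n*N" "r2 < n*N" using C by (auto simp: adjoint_alt)
    then have Np: "N > 0" by (cases N) auto
    define i j s t where "i = r1 div N" "j = r2 div N" "s = r1 mod N" "t = r2 mod N"
    have ij: "i < n" "j < n" using r unfolding i_j_s_t_def by (auto simp: less_mult_imp_div_less)
    have st: "s < N" "t < N" using Np unfolding i_j_s_t_def by auto
    have "(mat_adjoint C * C) $$ (r1,r2) = (\<Sum>r<n*N. cnj (C $$ (r, r1)) * C $$ (r, r2))"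
      using C r by (subst mult_entry) (auto simp: adjoint_alt)
    also have "\<dots> = (\<Sum>l<n. \<Sum>u<N. cnj (C $$ (u + l*N, r1)) * C $$ (u + l*N, r2))"
      by (rule sum_mult_product)
    also have "\<dots> = (\<Sum>l<n. \<Sum>u<N. cnj (cent w B l u i s) * cent w B l u j t)"
    proof (intro sum.cong refl)
      fix l u assume lu: "l \<in> {..<n}" "u \<in> {..<N}"
      then have "u + l*N < n*N" using lt[of l u N] by (simp add: add.commute)
      then show "cnj (C $$ (u + l*N, r1)) * C $$ (u + l*N, r2) = cnj (cent w B l u i s) * cent w B l u j t"
        using r lu unfolding C_def i_j_s_t_def by simp
    qed
    also have "\<dots> = (\<Sum>l<n. (case L s of Inl (k,a) \<Rightarrow> (case L t of Inl (k2,b) \<Rightarrow> if k = k2 then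
       complex_of_real (w k) * (\<Sum>c<p. cnj (B $$ (l*p+c, i*p+a)) * B $$ (l*p+c, j*p+b)) else 0 | Inr _ \<Rightarrow> 0) | Inr _ \<Rightarrow> 0))"
      by (intro sum.cong refl inner_sum[OF w st]) auto
    also have "\<dots> = gent L c (X i j) s t"
    proof (cases "L s")
      case (Inl ka)
      then obtain k a where ls: "L s = Inl (k,a)" by (cases ka) auto
      have ka: "k < G" "a < p" using L_Inl[OF st(1) ls] by auto
      show ?thesis
      proof (cases "L t")
        case (Inl kb)
        then obtain k2 b where lt2: "L t = Inl (k2,b)" by (cases kb) auto
        have kb: "k2 < G" "b < p" using L_Inl[OF st(2) lt2] by auto
        show ?thesis using ls lt2 Xent[OF ij ka(2) kb(2)] cw[OF ka(1)]
          by (cases "k = k2") (simp_all add: gent_def sum_distrib_left)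
      next
        case (Inr r)
        then show ?thesis using ls by (simp add: gent_def)
      qed
    next
      case (Inr r)
      then show ?thesis by (simp add: gent_def)
    qed
    also have "\<dots> = blockmat n N (\<lambda>i j. grp L N c (X i j)) $$ (r1,r2)"
      using r st unfolding i_j_s_t_def by (simp add: blockmat_def)
    finally show "blockmat n N (\<lambda>i j. grp L N c (X i j)) $$ (r1,r2) = (mat_adjoint C * C) $$ (r1,r2)" by simp
  qed (use C in \<open>auto simp: blockmat_def adjoint_alt\<close>)
  moreover have "dim_row (blockmat n N (\<lambda>i j. grp L N c (X i j))) = n * N" by (simp add: blockmat_def)
  ultimately show ?thesis unfolding psd_def using C by (auto simp: blockmat_def)
qed

end


fun lay :: "nat \<Rightarrow> nat \<Rightarrow> nat \<Rightarrow> nat \<Rightarrow> (nat \<times> nat) + nat" where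
  "lay p q 0 s = Inr 0"
| "lay p q (Suc n) s = (case lay p q n (s mod q^n) of
      Inl (k,a) \<Rightarrow> Inl (q*k + s div q^n, a)
    | Inr l \<Rightarrow> (if (s div q^n) * (q^n mod p) + l < p * (q * (q^n mod p) div p)
               then Inl (q * (q^n div p) + ((s div q^n) * (q^n mod p) + l) div p, ((s div q^n) * (q^n mod p) + l) mod p)
               else Inr ((s div q^n) * (q^n mod p) + l - p * (q * (q^n mod p) div p))))"

lemma G_Suc: fixes p q n :: nat shows "p > 0 \<Longrightarrow> q^(Suc n) div p = q * (q^n div p) + q * (q^n mod p) div p"
proof -
  assume p: "p > 0"
  define A where "A = q^n div p"
  define B where "B = q^n mod p"
  have "p * A + B = q^n" unfolding A_def B_def by (rule mult_div_mod_eq)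
  then have "q^(Suc n) = q * (p * A + B)" by simp
  also have "\<dots> = (q * B) + (q * A) * p" by (simp add: algebra_simps)
  finally have "q^(Suc n) div p = ((q * B) + (q * A) * p) div p" by simp
  also have "\<dots> = q * B div p + q * A" using p by simp
  finally show ?thesis unfolding A_def B_def by simp
qed

lemma R_Suc: fixes p q n :: nat shows "q^(Suc n) mod p = q * (q^n mod p) - p * (q * (q^n mod p) div p)"
proof -
  have "q^(Suc n) mod p = (q * (q^n mod p)) mod p" unfolding power_Suc by (rule mod_mult_right_eq[symmetric])
  also have "\<dots> = q * (q^n mod p) - p * (q * (q^n mod p) div p)" by (simp add: minus_mult_div_eq_mod)
  finally show ?thesis .
qed

lemma lay_range:
  assumes p: "p \<ge> 2" and q: "q \<ge> 1"
  shows "s < q^n \<Longrightarrow> lay p q n s \<in> lset (q^n div p) p (q^n mod p)"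
proof (induction n arbitrary: s)
  case 0
  then show ?case using p by (simp add: lset_def)
next
  case (Suc n)
  define c where "c = s div q^n"
  define s0 where "s0 = s mod q^n"
  have qn: "q^n > 0" using q by simp
  have c: "c < q" using Suc.prems unfolding c_def by (simp add: less_mult_imp_div_less mult.commute)
  have s0: "s0 < q^n" unfolding s0_def using qn by simp
  have IH: "lay p q n s0 \<in> lset (q^n div p) p (q^n mod p)" using Suc.IH[OF s0] .
  show ?case
  proof (cases "lay p q n s0")
    case (Inl ka)
    then obtain k a where L: "lay p q n s0 = Inl (k,a)" by (cases ka) auto
    have ka: "k < q^n div p" "a < p" using IH L by (auto simp: lset_def)
    have "q*k + c < q * (q^n div p)"
    proof -
      have "q*k + c < q*k + q" using c by simp
      also have "\<dots> = q * (k+1)" by simp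
      also have "\<dots> \<le> q * (q^n div p)" using ka by (intro mult_left_mono) auto
      finally show ?thesis .
    qed
    moreover have "lay p q (Suc n) s = Inl (q*k + c, a)" using L unfolding c_def s0_def by simp
    ultimately show ?thesis using ka G_Suc[of p q n] p by (auto simp: lset_def)
  next
    case (Inr l)
    then have L: "lay p q n s0 = Inr l" .
    have l: "l < q^n mod p" using IH L by (auto simp: lset_def)
    define idx where "idx = c * (q^n mod p) + l"
    have idx: "idx < q * (q^n mod p)"
    proof -
      have "idx < c * (q^n mod p) + q^n mod p" unfolding idx_def using l by simp
      also have "\<dots> = (c+1) * (q^n mod p)" by simp
      also have "\<dots> \<le> q * (q^n mod p)" using c by (intro mult_right_mono) auto
      finally show ?thesis .
    qed
    show ?thesis
    proof (cases "idx < p * (q * (q^n mod p) div p)")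
      case True
      have "idx div p < q * (q^n mod p) div p" using True p by (simp add: div_less_iff_less_mult mult.commute)
      moreover have "lay p q (Suc n) s = Inl (q * (q^n div p) + idx div p, idx mod p)"
        using L True unfolding c_def s0_def idx_def by simp
      ultimately show ?thesis using G_Suc[of p q n] p by (auto simp: lset_def)
    next
      case False
      have "idx - p * (q * (q^n mod p) div p) < q^(Suc n) mod p"
        using idx False R_Suc[of q n p] by linarith
      moreover have "lay p q (Suc n) s = Inr (idx - p * (q * (q^n mod p) div p))"
        using L False unfolding c_def s0_def idx_def by simp
      ultimately show ?thesis by (auto simp: lset_def)
    qed
  qed
qed


definition lstep :: "nat \<Rightarrow> nat \<Rightarrow> nat \<Rightarrow> (nat \<times> nat) + nat \<Rightarrow> nat \<Rightarrow> (nat \<times> nat) + nat" where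
  "lstep p q n z c = (case z of
      Inl (k,a) \<Rightarrow> Inl (q*k + c, a)
    | Inr l \<Rightarrow> (if c * (q^n mod p) + l < p * (q * (q^n mod p) div p)
               then Inl (q * (q^n div p) + (c * (q^n mod p) + l) div p, (c * (q^n mod p) + l) mod p)
               else Inr (c * (q^n mod p) + l - p * (q * (q^n mod p) div p))))"

lemma lay_Suc': "lay p q (Suc n) s = lstep p q n (lay p q n (s mod q^n)) (s div q^n)"
  by (simp add: lstep_def)

lemma lstep_inj:
  fixes p q n :: nat
  assumes p: "p \<ge> 2" and z: "z \<in> lset (q^n div p) p (q^n mod p)" and z': "z' \<in> lset (q^n div p) p (q^n mod p)"
    and c: "c < q" and c': "c' < q" and eq: "lstep p q n z c = lstep p q n z' c'"
  shows "z = z' \<and> c = c'"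
proof -
  define G R D where "G = q^n div p" "R = q^n mod p" "D = q * (q^n mod p) div p"
  have inl_small: "q * k + c < q * G" if "k < G" "c < q" for k c
  proof -
    have "q*k + c < q*k + q" using that by simp
    also have "\<dots> = q * (k+1)" by simp
    also have "\<dots> \<le> q * G" using that by (intro mult_left_mono) auto
    finally show ?thesis .
  qed
  have idx_inj: "c1 = c2 \<and> l1 = l2" if "c1 * R + l1 = c2 * R + l2" "l1 < R" "l2 < R" for c1 c2 l1 l2 :: nat
  proof -
    have R0: "R \<noteq> 0" using that by auto
    have "(l1 + c1 * R) div R = c1" "(l1 + c1 * R) mod R = l1" using that(2) R0 by auto
    moreover have "(l2 + c2 * R) div R = c2" "(l2 + c2 * R) mod R = l2" using that(3) R0 by auto
    moreover have "l1 + c1 * R = l2 + c2 * R" using that(1) by simp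
    ultimately show ?thesis by metis
  qed
  show ?thesis
  proof (cases z)
    case (Inl ka)
    then obtain k a where zk: "z = Inl (k,a)" by (cases ka) auto
    have ka: "k < G" "a < p" using z zk by (auto simp: lset_def G_R_D_def)
    show ?thesis
    proof (cases z')
      case (Inl kb)
      then obtain k' a' where zk': "z' = Inl (k',a')" by (cases kb) auto
      from eq have e: "q*k + c = q*k' + c'" "a = a'" using zk zk' by (auto simp: lstep_def)
      have "(q*k + c) mod q = c" "(q*k' + c') mod q = c'" using c c' by auto
      then have cc: "c = c'" using e by metis
      then have "q * k = q * k'" using e by simp
      then have "k = k'" using c by simp
      then show ?thesis using zk zk' e cc by simp
    next
      case (Inr l')
      have "q * k + c < q * G" using inl_small ka c by simp
      then show ?thesis using eq zk Inr unfolding G_R_D_def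
        by (auto simp: lstep_def split: if_splits)
    qed
  next
    case (Inr l)
    have l: "l < R" using z Inr by (auto simp: lset_def G_R_D_def)
    show ?thesis
    proof (cases z')
      case (Inl kb)
      then obtain k' a' where zk': "z' = Inl (k',a')" by (cases kb) auto
      have ka: "k' < G" "a' < p" using z' zk' by (auto simp: lset_def G_R_D_def)
      have "q * k' + c' < q * G" using inl_small ka c' by simp
      then show ?thesis using eq zk' Inr unfolding G_R_D_def
        by (auto simp: lstep_def split: if_splits)
    next
      case (Inr l')
      have l': "l' < R" using z' Inr by (auto simp: lset_def G_R_D_def)
      have "c * R + l = c' * R + l'"
      proof (cases "c * R + l < p * D")
        case T1: True
        show ?thesis
        proof (cases "c' * R + l' < p * D")
          case True
          then have "(c * R + l) div p = (c' * R + l') div p" "(c * R + l) mod p = (c' * R + l') mod p"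
            using eq T1 \<open>z = Inr l\<close> \<open>z' = Inr l'\<close> unfolding G_R_D_def by (auto simp: lstep_def)
          then show ?thesis by (metis div_mult_mod_eq)
        next
          case False
          then show ?thesis using eq T1 \<open>z = Inr l\<close> \<open>z' = Inr l'\<close> unfolding G_R_D_def by (auto simp: lstep_def)
        qed
      next
        case F1: False
        show ?thesis
        proof (cases "c' * R + l' < p * D")
          case True
          then show ?thesis using eq F1 \<open>z = Inr l\<close> \<open>z' = Inr l'\<close> unfolding G_R_D_def by (auto simp: lstep_def)
        next
          case False
          then have "c * R + l - p * D = c' * R + l' - p * D"
            using eq F1 \<open>z = Inr l\<close> \<open>z' = Inr l'\<close> unfolding G_R_D_def by (auto simp: lstep_def)
          then show ?thesis using F1 False by linarith
        qed
      qed
      then have "c = c' \<and> l = l'" using idx_inj l l' by blast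
      then show ?thesis using \<open>z = Inr l\<close> \<open>z' = Inr l'\<close> by simp
    qed
  qed
qed

lemma lay_inj:
  assumes p: "p \<ge> 2" and q: "q \<ge> 1"
  shows "inj_on (lay p q n) {..<q^n}"
proof (induction n)
  case 0
  then show ?case by (simp add: inj_on_def)
next
  case (Suc n)
  show ?case
  proof (rule inj_onI)
    fix s t assume s: "s \<in> {..<q^Suc n}" and t: "t \<in> {..<q^Suc n}" and e: "lay p q (Suc n) s = lay p q (Suc n) t"
    have qn: "q^n > 0" using q by simp
    have cs: "s div q^n < q" "t div q^n < q" using s t by (auto simp: less_mult_imp_div_less mult.commute)
    have r: "lay p q n (s mod q^n) \<in> lset (q^n div p) p (q^n mod p)" "lay p q n (t mod q^n) \<in> lset (q^n div p) p (q^n mod p)"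
      using lay_range[OF p q] qn by auto
    have "lay p q n (s mod q^n) = lay p q n (t mod q^n) \<and> s div q^n = t div q^n"
      by (rule lstep_inj[OF p r cs]) (use e in \<open>simp only: lay_Suc'\<close>)
    moreover then have "s mod q^n = t mod q^n" using Suc.IH qn by (auto simp: inj_on_def)
    ultimately show "s = t" by (metis div_mult_mod_eq)
  qed
qed

lemma card_lset: "card (lset G p R) = G * p + R"
proof -
  have "card (lset G p R) = card (Inl ` ({..<G} \<times> {..<p}) :: ((nat \<times> nat) + nat) set) + card (Inr ` {..<R} :: ((nat \<times> nat) + nat) set)"
    unfolding lset_def by (rule card_Un_disjoint) auto
  also have "\<dots> = G * p + R" by (simp add: card_image card_cartesian_product)
  finally show ?thesis .
qed

lemma lay_bij:
  assumes p: "p \<ge> 2" and q: "q \<ge> 1"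
  shows "bij_betw (lay p q n) {..<q^n} (lset (q^n div p) p (q^n mod p))"
proof -
  have sub: "lay p q n ` {..<q^n} \<subseteq> lset (q^n div p) p (q^n mod p)" using lay_range[OF p q] by auto
  have "card (lay p q n ` {..<q^n}) = q^n" using lay_inj[OF p q] by (simp add: card_image)
  also have "\<dots> = card (lset (q^n div p) p (q^n mod p))" by (simp add: card_lset)
  finally have "lay p q n ` {..<q^n} = lset (q^n div p) p (q^n mod p)"
    by (intro card_subset_eq sub) (auto simp: lset_def)
  then show ?thesis using lay_inj[OF p q] by (simp add: bij_betw_def)
qed



fun rho :: "nat \<Rightarrow> nat \<Rightarrow> nat \<Rightarrow> nat" where
  "rho q 0 e = 0"
| "rho q (Suc d) e = q * rho q d (e mod q^d) + e div q^d"

lemma rho_lt: "q \<ge> 1 \<Longrightarrow> e < q^d \<Longrightarrow> rho q d e < q^d"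
proof (induction d arbitrary: e)
  case 0
  then show ?case by simp
next
  case (Suc d)
  have qd: "q^d > 0" using Suc.prems by simp
  have r: "rho q d (e mod q^d) < q^d" using Suc.IH[OF Suc.prems(1)] qd by simp
  have c: "e div q^d < q" using Suc.prems(2) by (simp add: less_mult_imp_div_less mult.commute)
  have "q * rho q d (e mod q^d) + e div q^d < q * rho q d (e mod q^d) + q" using c by simp
  also have "\<dots> = q * (rho q d (e mod q^d) + 1)" by simp
  also have "\<dots> \<le> q * q^d" using r by (intro mult_left_mono) auto
  finally show ?case by simp
qed

lemma rho_inj: "q \<ge> 1 \<Longrightarrow> e < q^d \<Longrightarrow> e' < q^d \<Longrightarrow> rho q d e = rho q d e' \<Longrightarrow> e = e'"
proof (induction d arbitrary: e e')
  case 0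
  then show ?case by simp
next
  case (Suc d)
  have qd: "q^d > 0" using Suc.prems by simp
  have c: "e div q^d < q" "e' div q^d < q" using Suc.prems(2,3) by (auto simp: less_mult_imp_div_less mult.commute)
  have e: "q * rho q d (e mod q^d) + e div q^d = q * rho q d (e' mod q^d) + e' div q^d" using Suc.prems(4) by simp
  have "(q * rho q d (e mod q^d) + e div q^d) mod q = e div q^d" "(q * rho q d (e' mod q^d) + e' div q^d) mod q = e' div q^d"
    using c by auto
  then have cc: "e div q^d = e' div q^d" using e by metis
  then have "rho q d (e mod q^d) = rho q d (e' mod q^d)" using e Suc.prems(1) by simp
  then have "e mod q^d = e' mod q^d" using Suc.IH[OF Suc.prems(1)] qd by simp
  then show ?case using cc by (metis div_mult_mod_eq)
qed

lemma mod_div_aux: fixes s a b :: nat shows "(s mod (a * b)) div a = (s div a) mod b"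
proof (cases "a = 0")
  case True
  then show ?thesis by simp
next
  case False
  have "s mod (a * b) = s mod a + ((s div a) mod b) * a" by (simp add: mod_mult2_eq mult.commute)
  then have "(s mod (a * b)) div a = (s mod a + ((s div a) mod b) * a) div a" by simp
  also have "\<dots> = (s div a) mod b + (s mod a) div a" using False by (rule div_mult_self1)
  finally show ?thesis by simp
qed
    
lemma lay_lift:
  assumes p: "p \<ge> 2" and q: "q \<ge> 1"
  shows "s < q^(m+d) \<Longrightarrow> lay p q m (s mod q^m) = Inl (k,a) \<Longrightarrow>
    lay p q (m+d) s = Inl (k * q^d + rho q d (s div q^m), a)"
proof (induction d arbitrary: s)
  case 0
  then show ?case by simp
next
  case (Suc d)
  define s' where "s' = s mod q^(m+d)"
  have qq: "q^(m+d) > 0" using q by simp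
  have s': "s' < q^(m+d)" using qq unfolding s'_def by simp
  have "s' mod q^m = s mod q^m" unfolding s'_def by (simp add: power_add mod_mod_cancel)
  then have IH: "lay p q (m+d) s' = Inl (k * q^d + rho q d (s' div q^m), a)"
    using Suc.IH[OF s'] Suc.prems(2) by simp
  have d1: "s' div q^m = (s div q^m) mod q^d" unfolding s'_def by (simp add: power_add mod_div_aux)
  have d2: "s div q^(m+d) = (s div q^m) div q^d" by (simp add: power_add div_mult2_eq)
  have "lay p q (m + Suc d) s = lstep p q (m+d) (lay p q (m+d) s') (s div q^(m+d))"
    unfolding s'_def by (simp add: lay_Suc' del: lay.simps)
  also have "\<dots> = Inl (q * (k * q^d + rho q d (s' div q^m)) + s div q^(m+d), a)"
    using IH by (simp add: lstep_def)
  also have "\<dots> = Inl (k * q^(Suc d) + rho q (Suc d) (s div q^m), a)"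
    unfolding d1 d2 by (simp add: algebra_simps)
  finally show ?case .
qed

lemma G_mono:
  fixes p q m d :: nat
  shows "q^d * (q^m div p) \<le> q^(m+d) div p"
proof (cases "p = 0")
  case True
  then show ?thesis by simp
next
  case False
  have "(q^m div p) * p \<le> q^m" by simp
  then have "q^d * ((q^m div p) * p) \<le> q^d * q^m" by (rule mult_left_mono) simp
  then have "(q^d * (q^m div p) * p) div p \<le> q^(m+d) div p"
    by (intro div_le_mono) (simp add: power_add mult.assoc mult.commute)
  then show ?thesis using False by simp
qed

lemma lay_lift_new:
  assumes p: "p \<ge> 2" and q: "q \<ge> 1"
  shows "s < q^(m+d) \<Longrightarrow> lay p q m (s mod q^m) = Inr l \<Longrightarrow>
    (\<exists>l'. lay p q (m+d) s = Inr l') \<or> (\<exists>K a. lay p q (m+d) s = Inl (K,a) \<and> K \<ge> q^d * (q^m div p))"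
proof (induction d arbitrary: s)
  case 0
  then show ?case by simp
next
  case (Suc d)
  define s' where "s' = s mod q^(m+d)"
  have qq: "q^(m+d) > 0" using q by simp
  have s': "s' < q^(m+d)" using qq unfolding s'_def by simp
  have "s' mod q^m = s mod q^m" unfolding s'_def by (simp add: power_add mod_mod_cancel)
  then have IH: "(\<exists>l'. lay p q (m+d) s' = Inr l') \<or> (\<exists>K a. lay p q (m+d) s' = Inl (K,a) \<and> K \<ge> q^d * (q^m div p))"
    using Suc.IH[OF s'] Suc.prems(2) by simp
  have eq: "lay p q (m + Suc d) s = lstep p q (m+d) (lay p q (m+d) s') (s div q^(m+d))"
    unfolding s'_def by (simp add: lay_Suc' del: lay.simps)
  have Gm: "q * (q^d * (q^m div p)) \<le> q * (q^(m+d) div p)" using G_mono[of q d m p] by simp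
  from IH show ?case
  proof
    assume "\<exists>l'. lay p q (m+d) s' = Inr l'"
    then obtain l' where "lay p q (m+d) s' = Inr l'" by blast
    then have "(\<exists>l''. lay p q (m + Suc d) s = Inr l'') \<or> (\<exists>K a. lay p q (m + Suc d) s = Inl (K,a) \<and> K \<ge> q * (q^(m+d) div p))"
      unfolding eq by (auto simp: lstep_def)
    moreover have "q^(Suc d) * (q^m div p) \<le> q * (q^(m+d) div p)" using Gm by (simp add: mult.assoc)
    ultimately show ?thesis using order_trans by blast
  next
    assume "\<exists>K a. lay p q (m+d) s' = Inl (K,a) \<and> K \<ge> q^d * (q^m div p)"
    then obtain K a where K: "lay p q (m+d) s' = Inl (K,a)" "K \<ge> q^d * (q^m div p)" by blast
    have "q * (q^d * (q^m div p)) \<le> q * K" using K(2) by (rule mult_left_mono) simp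
    then have "q * K + s div q^(m+d) \<ge> q^(Suc d) * (q^m div p)" unfolding power_Suc mult.assoc by linarith
    moreover have "lay p q (m + Suc d) s = Inl (q * K + s div q^(m+d), a)" unfolding eq using K(1) by (simp add: lstep_def)
    ultimately show ?thesis by blast
  qed
qed



lemma divmod_eq_iff: fixes i j b :: nat shows "(i div b = j div b \<and> i mod b = j mod b) \<longleftrightarrow> i = j"
  by (metis div_mult_mod_eq)

lemma kron_pow:
  assumes A: "A \<in> carrier_mat M M" and M: "M > 0" and q: "q > 0"
  shows "(kron_id q ^^ d) A = mat (q^d*M) (q^d*M) (\<lambda>(s,t). if s div M = t div M then A $$ (s mod M, t mod M) else 0)"
proof (induction d)
  case 0
  show ?case using A by (auto intro!: eq_matI)
next
  case (Suc d)
  define B where "B = mat (q^d*M) (q^d*M) (\<lambda>(s,t). if s div M = t div M then A $$ (s mod M, t mod M) else 0)"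
  have "(kron_id q ^^ Suc d) A = kron_id q B" using Suc.IH unfolding B_def by simp
  also have "\<dots> = mat (q^Suc d*M) (q^Suc d*M) (\<lambda>(s,t). if s div M = t div M then A $$ (s mod M, t mod M) else 0)"
  proof (rule eq_matI)
    fix i j assume ij: "i < dim_row (mat (q^Suc d*M) (q^Suc d*M) (\<lambda>(s,t). if s div M = t div M then A $$ (s mod M, t mod M) else 0))"
      "j < dim_col (mat (q^Suc d*M) (q^Suc d*M) (\<lambda>(s,t). if s div M = t div M then A $$ (s mod M, t mod M) else 0))"
    then have ij': "i < q * (q^d * M)" "j < q * (q^d * M)" by auto
    have X: "q^d * M > 0" using M q by simp
    have m1: "(i mod (q^d*M)) mod M = i mod M" "(j mod (q^d*M)) mod M = j mod M"
      by (simp_all add: mod_mod_cancel)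
    have c1: "i div (q^d*M) = (i div M) div q^d" "j div (q^d*M) = (j div M) div q^d"
      by (simp_all add: div_mult2_eq mult.commute)
    have c2: "(i mod (q^d*M)) div M = (i div M) mod q^d" "(j mod (q^d*M)) div M = (j div M) mod q^d"
      by (simp_all add: mod_div_aux mult.commute)
    have "kron_id q B $$ (i,j) = (if i div (q^d*M) = j div (q^d*M) then B $$ (i mod (q^d*M), j mod (q^d*M)) else 0)"
      using ij' by (simp add: kron_id_def B_def)
    also have "\<dots> = (if i div (q^d*M) = j div (q^d*M) \<and> (i mod (q^d*M)) div M = (j mod (q^d*M)) div M
        then A $$ (i mod M, j mod M) else 0)"
      using X by (auto simp: B_def m1)
    also have "\<dots> = (if i div M = j div M then A $$ (i mod M, j mod M) else 0)"
      unfolding c1 c2 divmod_eq_iff ..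
    finally show "kron_id q B $$ (i,j) = mat (q^Suc d*M) (q^Suc d*M) (\<lambda>(s,t). if s div M = t div M then A $$ (s mod M, t mod M) else 0) $$ (i,j)"
      using ij by simp
  qed (auto simp: kron_id_def B_def)
  finally show ?case .
qed


lemma emb_grp:
  assumes p: "p \<ge> 2" and q: "q \<ge> 1" and x: "x \<in> carrier_mat p p"
  shows "uhf_emb q m (m+d) (grp (lay p q m) (q^m) c x) =
    grp (lay p q (m+d)) (q^(m+d)) (\<lambda>K. if K < q^d * (q^m div p) then c (K div q^d) else 0) x"
    (is "_ = grp _ _ ?c' x")
proof -
  define D where "D = q^d"
  define G where "G = q^m div p"
  have D: "D > 0" using q unfolding D_def by simp
  have Qm: "q^m > 0" using q by simp
  have emb: "uhf_emb q m (m+d) (grp (lay p q m) (q^m) c x) =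
     mat (q^d*q^m) (q^d*q^m) (\<lambda>(s,t). if s div q^m = t div q^m then grp (lay p q m) (q^m) c x $$ (s mod q^m, t mod q^m) else 0)"
    unfolding uhf_emb_def using q Qm by (simp add: kron_pow[of _ "q^m"])
  show ?thesis unfolding emb
  proof (rule eq_matI)
    fix s t assume "s < dim_row (grp (lay p q (m+d)) (q^(m+d)) ?c' x)" "t < dim_col (grp (lay p q (m+d)) (q^(m+d)) ?c' x)"
    then have st: "s < q^(m+d)" "t < q^(m+d)" by auto
    define S T s0 t0 where "S = s div q^m" "T = t div q^m" "s0 = s mod q^m" "t0 = t mod q^m"
    have s0: "s0 < q^m" "t0 < q^m" using Qm unfolding S_T_s0_t0_def by auto
    have pw: "q^(m+d) = q^d * q^m" by (simp add: power_add mult.commute)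
    have ST: "S < D" "T < D" using st unfolding S_T_s0_t0_def D_def pw
      by (auto intro: less_mult_imp_div_less)
    have lhs: "mat (q^d*q^m) (q^d*q^m) (\<lambda>(s,t). if s div q^m = t div q^m then grp (lay p q m) (q^m) c x $$ (s mod q^m, t mod q^m) else 0) $$ (s,t)
       = (if S = T then gent (lay p q m) c x s0 t0 else 0)"
      using st s0 unfolding S_T_s0_t0_def by (simp add: power_add mult.commute)
    have rhs: "grp (lay p q (m+d)) (q^(m+d)) ?c' x $$ (s,t) = gent (lay p q (m+d)) ?c' x s t" using st by simp
    have rs: "lay p q m s0 \<in> lset G p (q^m mod p)" "lay p q m t0 \<in> lset G p (q^m mod p)"
      using lay_range[OF p q] s0 unfolding G_def by auto
    have new: "(\<exists>l'. lay p q (m+d) u = Inr l') \<or> (\<exists>K a. lay p q (m+d) u = Inl (K,a) \<and> K \<ge> D * G)"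
      if "u < q^(m+d)" "lay p q m (u mod q^m) = Inr l" for u l
      using lay_lift_new[OF p q that] unfolding D_def G_def .
    have old: "lay p q (m+d) u = Inl (k * D + rho q d (u div q^m), a) \<and> k * D + rho q d (u div q^m) < D * G
       \<and> rho q d (u div q^m) < D"
      if "u < q^(m+d)" "lay p q m (u mod q^m) = Inl (k,a)" for u k a
    proof -
      have k: "k < G" using lay_range[OF p q, of "u mod q^m" m] that Qm unfolding G_def by (auto simp: lset_def)
      have "u div q^m < q^d" using that(1) unfolding pw by (auto intro: less_mult_imp_div_less)
      then have r: "rho q d (u div q^m) < D" using rho_lt[OF q] unfolding D_def by simp
      have "k * D + rho q d (u div q^m) < k * D + D" using r by simp
      also have "\<dots> = (k+1) * D" by simp
      also have "\<dots> \<le> G * D" using k by (intro mult_right_mono) auto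
      finally show ?thesis using lay_lift[OF p q that] r unfolding D_def by (simp add: mult.commute)
    qed
    have "(if S = T then gent (lay p q m) c x s0 t0 else 0) = gent (lay p q (m+d)) ?c' x s t"
    proof (cases "lay p q m s0")
      case (Inl ka)
      then obtain k a where ls: "lay p q m s0 = Inl (k,a)" by (cases ka) auto
      have k: "k < G" using rs ls by (auto simp: lset_def)
      have os: "lay p q (m+d) s = Inl (k * D + rho q d S, a)" "k * D + rho q d S < D * G" "rho q d S < D"
        using old[OF st(1), of k a] ls unfolding S_T_s0_t0_def by auto
      have cs: "?c' (k * D + rho q d S) = c k"
      proof -
        have "(k * D + rho q d S) div D = k" using os(3) D by simp
        then show ?thesis using os(2) unfolding D_def G_def by simp
      qed
      show ?thesis
      proof (cases "lay p q m t0")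
        case (Inl kb)
        then obtain k' b where lt: "lay p q m t0 = Inl (k',b)" by (cases kb) auto
        have ot: "lay p q (m+d) t = Inl (k' * D + rho q d T, b)" "rho q d T < D"
          using old[OF st(2), of k' b] lt unfolding S_T_s0_t0_def by auto
        have iff: "k * D + rho q d S = k' * D + rho q d T \<longleftrightarrow> k = k' \<and> S = T"
        proof
          assume e: "k * D + rho q d S = k' * D + rho q d T"
          have "(k * D + rho q d S) div D = k" "(k' * D + rho q d T) div D = k'"
            "(k * D + rho q d S) mod D = rho q d S" "(k' * D + rho q d T) mod D = rho q d T"
            using os(3) ot(2) D by auto
          then have "k = k'" "rho q d S = rho q d T" using e by metis+
          moreover have "S = T" using rho_inj[OF q, of S d T] ST \<open>rho q d S = rho q d T\<close> unfolding D_def by simp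
          ultimately show "k = k' \<and> S = T" by simp
        qed simp
        show ?thesis using os(1) ot(1) iff cs ls lt by (auto simp: gent_def)
      next
        case (Inr l)
        then have lt: "lay p q m (t mod q^m) = Inr l" unfolding S_T_s0_t0_def .
        have "gent (lay p q (m+d)) ?c' x s t = 0"
          using new[OF st(2) lt]
        proof
          assume "\<exists>l'. lay p q (m+d) t = Inr l'"
          then show ?thesis by (auto simp: gent_def os(1))
        next
          assume "\<exists>K a. lay p q (m+d) t = Inl (K,a) \<and> K \<ge> D * G"
          then obtain K b where K: "lay p q (m+d) t = Inl (K,b)" "K \<ge> D * G" by blast
          then have "k * D + rho q d S \<noteq> K" using os(2) by simp
          then show ?thesis using K(1) os(1) by (simp add: gent_def)
        qed
        then show ?thesis using ls Inr by (simp add: gent_def)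
      qed
    next
      case (Inr l)
      then have ls: "lay p q m (s mod q^m) = Inr l" unfolding S_T_s0_t0_def .
      have "gent (lay p q (m+d)) ?c' x s t = 0"
        using new[OF st(1) ls]
      proof
        assume "\<exists>l'. lay p q (m+d) s = Inr l'"
        then show ?thesis by (auto simp: gent_def)
      next
        assume "\<exists>K a. lay p q (m+d) s = Inl (K,a) \<and> K \<ge> D * G"
        then obtain K a where K: "lay p q (m+d) s = Inl (K,a)" "K \<ge> D * G" by blast
        have "?c' K = 0" using K(2) unfolding D_def G_def by simp
        then show ?thesis using K(1) by (auto simp: gent_def split: sum.splits)
      qed
      then show ?thesis using Inr by (simp add: gent_def)
    qed
    then show "mat (q^d*q^m) (q^d*q^m) (\<lambda>(s,t). if s div q^m = t div q^m then grp (lay p q m) (q^m) c x $$ (s mod q^m, t mod q^m) else 0) $$ (s,t)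
      = grp (lay p q (m+d)) (q^(m+d)) ?c' x $$ (s,t)" using lhs rhs by simp
  qed (auto simp: power_add mult.commute)
qed



lemma diag_of_carrier[simp]: "diag_of N g \<in> carrier_mat N N" "dim_row (diag_of N g) = N" "dim_col (diag_of N g) = N"
  by (auto simp: diag_of_def)

lemma adjoint_carrier[simp]: "(U :: complex mat) \<in> carrier_mat N M \<Longrightarrow> mat_adjoint U \<in> carrier_mat M N"
  by (auto simp: adjoint_alt)

lemma adjoint_one: "mat_adjoint (1\<^sub>m N :: complex mat) = 1\<^sub>m N"
  by (rule eq_matI) (auto simp: adjoint_alt)

lemma conj_entry:
  assumes U: "U \<in> carrier_mat N N" and s: "s < N" and t: "t < N"
  shows "(U * diag_of N g * mat_adjoint U) $$ (s,t) = (\<Sum>i<N. U $$ (s,i) * g i * cnj (U $$ (t,i)))"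
proof -
  have "(U * diag_of N g * mat_adjoint U) $$ (s,t) = (\<Sum>i<N. (U * diag_of N g) $$ (s,i) * mat_adjoint U $$ (i,t))"
    using U s t by (subst mult_entry) (auto simp: adjoint_alt)
  also have "\<dots> = (\<Sum>i<N. U $$ (s,i) * g i * cnj (U $$ (t,i)))"
  proof (intro sum.cong refl)
    fix i assume i: "i \<in> {..<N}"
    have "(U * diag_of N g) $$ (s,i) = (\<Sum>j<N. U $$ (s,j) * diag_of N g $$ (j,i))"
      using U s i by (subst mult_entry) auto
    also have "\<dots> = (\<Sum>j<N. if j = i then U $$ (s,i) * g i else 0)"
      using i by (intro sum.cong refl) (auto simp: diag_of_def)
    also have "\<dots> = U $$ (s,i) * g i" using i by simp
    finally show "(U * diag_of N g) $$ (s,i) * mat_adjoint U $$ (i,t) = U $$ (s,i) * g i * cnj (U $$ (t,i))"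
      using U i t by (simp add: adjoint_alt)
  qed
  finally show ?thesis .
qed

lemma mat_fun_diag:
  fixes e :: "nat \<Rightarrow> real" and f :: "real \<Rightarrow> complex"
  shows "ntrace (mat_fun f (diag_of N (\<lambda>s. complex_of_real (e s)))) = (\<Sum>s<N. f (e s)) / of_nat N"
proof -
  define A where "A = diag_of N (\<lambda>s. complex_of_real (e s))"
  have dA: "dim_row A = N" unfolding A_def by simp
  let ?P = "\<lambda>B. \<exists>U d. unitary_mat N U \<and> A = U * diag_of N (\<lambda>i. complex_of_real (d i)) * mat_adjoint U \<and>
      B = U * diag_of N (\<lambda>i. f (d i)) * mat_adjoint U"
  have ex: "\<exists>B. ?P B"
  proof (intro exI conjI)
    show "unitary_mat N (1\<^sub>m N)" unfolding unitary_mat_def adjoint_one by simp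
    show "A = 1\<^sub>m N * diag_of N (\<lambda>i. complex_of_real (e i)) * mat_adjoint (1\<^sub>m N)"
      unfolding adjoint_one A_def by simp
  qed (rule refl)
  have mf: "mat_fun f A = (SOME B. ?P B)" unfolding mat_fun_def dA ..
  obtain U d where U: "unitary_mat N U" and AU: "A = U * diag_of N (\<lambda>i. complex_of_real (d i)) * mat_adjoint U"
    and B: "mat_fun f A = U * diag_of N (\<lambda>i. f (d i)) * mat_adjoint U"
    using someI_ex[OF ex] unfolding mf[symmetric] by blast
  have Uc: "U \<in> carrier_mat N N" and UU: "mat_adjoint U * U = 1\<^sub>m N" using U unfolding unitary_mat_def by auto
  have UU': "U * mat_adjoint U = 1\<^sub>m N"
    by (rule mat_mult_left_right_inverse[OF _ Uc UU]) (use Uc in simp)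
  define Dd where "Dd = diag_of N (\<lambda>i. complex_of_real (d i))"
  have Ddc: "Dd \<in> carrier_mat N N" unfolding Dd_def by simp
  have "A * U = (U * Dd) * mat_adjoint U * U" unfolding AU Dd_def by simp
  also have "\<dots> = (U * Dd) * (mat_adjoint U * U)"
    by (rule assoc_mult_mat[of _ N N _ N _ N]) (use Uc Ddc in auto)
  also have "\<dots> = U * Dd" unfolding UU using Uc Ddc by simp
  finally have AUe: "A * U = U * Dd" .
  have key: "U $$ (s,i) = 0 \<or> e s = d i" if s: "s < N" and i: "i < N" for s i
  proof -
    have "(A * U) $$ (s,i) = (\<Sum>j<N. A $$ (s,j) * U $$ (j,i))"
      using s i Uc by (subst mult_entry) (auto simp: A_def)
    also have "\<dots> = (\<Sum>j<N. if j = s then complex_of_real (e s) * U $$ (s,i) else 0)"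
      using s by (intro sum.cong refl) (auto simp: A_def diag_of_def)
    also have "\<dots> = complex_of_real (e s) * U $$ (s,i)" using s by simp
    finally have l: "(A * U) $$ (s,i) = complex_of_real (e s) * U $$ (s,i)" .
    have "(U * Dd) $$ (s,i) = (\<Sum>j<N. U $$ (s,j) * Dd $$ (j,i))"
      using s i Uc by (subst mult_entry) (auto simp: Dd_def)
    also have "\<dots> = (\<Sum>j<N. if j = i then U $$ (s,i) * complex_of_real (d i) else 0)"
      using i by (intro sum.cong refl) (auto simp: Dd_def diag_of_def)
    also have "\<dots> = U $$ (s,i) * complex_of_real (d i)" using i by simp
    finally have r: "(U * Dd) $$ (s,i) = U $$ (s,i) * complex_of_real (d i)" .
    have "(A * U) $$ (s,i) = (U * Dd) $$ (s,i)" using AUe by simp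
    then have "complex_of_real (e s) * U $$ (s,i) = U $$ (s,i) * complex_of_real (d i)" unfolding l r .
    then have "U $$ (s,i) * (complex_of_real (e s) - complex_of_real (d i)) = 0" by (simp add: algebra_simps)
    then have "U $$ (s,i) = 0 \<or> complex_of_real (e s) = complex_of_real (d i)" by simp
    then show ?thesis by (metis of_real_eq_iff)
  qed
  have rows: "(\<Sum>i<N. U $$ (s,i) * cnj (U $$ (s,i))) = 1" if s: "s < N" for s
  proof -
    have "(U * mat_adjoint U) $$ (s,s) = (\<Sum>i<N. U $$ (s,i) * mat_adjoint U $$ (i,s))"
      using s Uc by (subst mult_entry) (auto simp: adjoint_alt)
    also have "\<dots> = (\<Sum>i<N. U $$ (s,i) * cnj (U $$ (s,i)))"
      using s Uc by (intro sum.cong refl) (auto simp: adjoint_alt)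
    finally show ?thesis using UU' s by simp
  qed
  have diagB: "mat_fun f A $$ (s,s) = f (e s)" if s: "s < N" for s
  proof -
    have "mat_fun f A $$ (s,s) = (\<Sum>i<N. U $$ (s,i) * f (d i) * cnj (U $$ (s,i)))"
      unfolding B using conj_entry[OF Uc s s] .
    also have "\<dots> = (\<Sum>i<N. f (e s) * (U $$ (s,i) * cnj (U $$ (s,i))))"
    proof (intro sum.cong refl)
      fix i assume i: "i \<in> {..<N}"
      show "U $$ (s,i) * f (d i) * cnj (U $$ (s,i)) = f (e s) * (U $$ (s,i) * cnj (U $$ (s,i)))"
        using key[OF s, of i] i by (cases "U $$ (s,i) = 0") (auto simp: mult_ac)
    qed
    also have "\<dots> = f (e s)" using rows[OF s] by (simp add: sum_distrib_left[symmetric])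
    finally show ?thesis .
  qed
  have dB: "dim_row (mat_fun f A) = N" unfolding B using Uc by simp
  show ?thesis unfolding A_def[symmetric] ntrace_def dB using diagB by simp
qed



lemma tele:
  fixes f :: "real \<Rightarrow> complex"
  assumes f: "f integrable_on {0..1}" and h: "h > 0"
  shows "real G * h \<le> 1 \<Longrightarrow> integral {1 - real G * h .. 1} f = (\<Sum>k<G. integral {1 - real (Suc k) * h .. 1 - real k * h} f)"
proof (induction G)
  case 0
  then show ?case by simp
next
  case (Suc G)
  have G: "real G * h \<le> 1" using Suc.prems h by (simp add: distrib_right)
  have sub: "f integrable_on {1 - real (Suc G) * h .. 1}"
    by (rule integrable_subinterval_real[OF f]) (use Suc.prems in auto)
  have "integral {1 - real (Suc G) * h .. 1} f = integral {1 - real (Suc G) * h .. 1 - real G * h} f + integral {1 - real G * h .. 1} f"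
    by (rule Henstock_Kurzweil_Integration.integral_combine[symmetric, OF _ _ sub]) (use h G in \<open>auto simp: distrib_right\<close>)
  then show ?case using Suc.IH[OF G] by simp
qed

lemma riemann_abs:
  fixes f :: "real \<Rightarrow> complex"
  assumes cont: "continuous_on {0..1} f" and e: "e > 0"
  shows "\<exists>\<delta>>0. \<forall>h G. 0 < h \<and> h < \<delta> \<and> real G * h \<le> 1 \<and> 1 - real G * h \<le> h \<longrightarrow>
    norm (of_real h * (\<Sum>k<G. f (1 - real (Suc k) * h)) - integral {0..1} f) \<le> e"
proof -
  have "bounded (f ` {0..1})" by (rule compact_imp_bounded[OF compact_continuous_image[OF cont compact_Icc]])
  then obtain M0 where M0': "\<forall>y\<in>f ` {0..1}. norm y \<le> M0" unfolding bounded_iff by blast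
  then have M0: "\<And>x. x \<in> {0..1} \<Longrightarrow> norm (f x) \<le> M0" by blast
  define M where "M = max M0 0"
  have M: "\<And>x. x \<in> {0..1} \<Longrightarrow> norm (f x) \<le> M" "M \<ge> 0" using M0 unfolding M_def by force+
  have "uniformly_continuous_on {0..1} f" by (rule compact_uniformly_continuous[OF cont compact_Icc])
  then obtain d where d: "d > 0" and ud: "\<And>x x'. x \<in> {0..1} \<Longrightarrow> x' \<in> {0..1} \<Longrightarrow> dist x' x < d \<Longrightarrow> dist (f x') (f x) < e/2"
    unfolding uniformly_continuous_on_def using e by (meson half_gt_zero)
  define \<delta> where "\<delta> = min d (e / (2 * (M + 1)))"
  have \<delta>: "\<delta> > 0" unfolding \<delta>_def using d e M(2) by simp
  have fi: "f integrable_on {0..1}" by (rule integrable_continuous_interval[OF cont])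
  show ?thesis
  proof (intro exI[of _ \<delta>] conjI allI impI \<delta>)
    fix h G assume hG: "0 < h \<and> h < \<delta> \<and> real G * h \<le> 1 \<and> 1 - real G * h \<le> h"
    then have h: "h > 0" "h < d" "h < e / (2 * (M + 1))" "real G * h \<le> 1" "1 - real G * h \<le> h"
      unfolding \<delta>_def by auto
    define a where "a = 1 - real G * h"
    have a: "0 \<le> a" "a \<le> h" "a \<le> 1" using h unfolding a_def by auto
    define I where "I k = integral {1 - real (Suc k) * h .. 1 - real k * h} f" for k
    have split: "integral {0..1} f = integral {0..a} f + (\<Sum>k<G. I k)"
    proof -
      have "integral {0..a} f + integral {a..1} f = integral {0..1} f"
        by (rule Henstock_Kurzweil_Integration.integral_combine[OF a(1) a(3) fi])
      then show ?thesis using tele[OF fi h(1) h(4)] unfolding a_def I_def by simp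
    qed
    have termk: "norm (of_real h * f (1 - real (Suc k) * h) - I k) \<le> e / 2 * h" if k: "k < G" for k
    proof -
      define x where "x = 1 - real (Suc k) * h"
      have xh: "x + h = 1 - real k * h" unfolding x_def by (simp add: algebra_simps)
      have "real (Suc k) * h \<le> real G * h" using k h(1) by (intro mult_right_mono) auto
      then have x0: "x \<ge> 0" using h(4) unfolding x_def by simp
      have x1: "x + h \<le> 1" using xh h(1) by (simp add: zero_le_mult_iff)
      have sub: "{x..x+h} \<subseteq> {0..1}" using x0 x1 h(1) by auto
      have cs: "continuous_on {x..x+h} f" by (rule continuous_on_subset[OF cont sub])
      have "I k = integral {x..x+h} f" unfolding I_def xh[symmetric] x_def ..
      moreover have "of_real h * f x = integral {x..x+h} (\<lambda>t. f x)"
        using h(1) by (simp add: content_real scaleR_conv_of_real)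
      moreover have i1: "f integrable_on {x..x+h}" by (rule integrable_continuous_interval[OF cs])
      moreover have i2: "(\<lambda>t. f x) integrable_on {x..x+h}" by (rule integrable_continuous_interval) (rule continuous_on_const)
      moreover have "integral {x..x+h} (\<lambda>t. f t - f x) = integral {x..x+h} f - integral {x..x+h} (\<lambda>t. f x)"
        by (rule integral_diff[OF i1 i2])
      ultimately have "of_real h * f x - I k = - integral {x..x+h} (\<lambda>t. f t - f x)"
        by simp
      then have "norm (of_real h * f x - I k) = norm (integral {x..x+h} (\<lambda>t. f t - f x))" by simp
      also have "\<dots> \<le> e / 2 * (x + h - x)"
      proof (rule integral_bound)
        show "x \<le> x + h" using h(1) by simp
        show "continuous_on {x..x+h} (\<lambda>t. f t - f x)" by (intro continuous_intros cs)
        fix t assume t: "t \<in> {x..x+h}"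
        have "dist t x < d" using t h(2) by (auto simp: dist_real_def)
        then have "dist (f t) (f x) < e/2" using ud[of x t] t sub x0 x1 h(1) by auto
        then show "norm (f t - f x) \<le> e / 2" by (simp add: dist_norm)
      qed
      finally show ?thesis unfolding x_def by simp
    qed
    have "norm (of_real h * (\<Sum>k<G. f (1 - real (Suc k) * h)) - integral {0..1} f)
        = norm ((\<Sum>k<G. of_real h * f (1 - real (Suc k) * h) - I k) - integral {0..a} f)"
      unfolding split by (simp add: sum_distrib_left sum_subtractf algebra_simps)
    also have "\<dots> \<le> norm (\<Sum>k<G. of_real h * f (1 - real (Suc k) * h) - I k) + norm (integral {0..a} f)"
      by (rule norm_triangle_ineq4)
    also have "norm (\<Sum>k<G. of_real h * f (1 - real (Suc k) * h) - I k) \<le> (\<Sum>k<G. e / 2 * h)"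
      by (rule order_trans[OF norm_sum sum_mono]) (use termk in auto)
    also have "(\<Sum>k<G. e / 2 * h) = e / 2 * (real G * h)" by simp
    also have "\<dots> \<le> e / 2" using h(4) e by (simp add: mult_left_le)
    also have "norm (integral {0..a} f) \<le> M * (a - 0)"
    proof (rule integral_bound)
      show "0 \<le> a" using a by simp
      show "continuous_on {0..a} f" by (rule continuous_on_subset[OF cont]) (use a in auto)
      fix t assume "t \<in> {0..a}" then show "norm (f t) \<le> M" using M(1) a by auto
    qed
    also have "M * (a - 0) \<le> e / 2"
    proof -
      have "M * a \<le> M * h" using a M(2) by (simp add: mult_left_mono)
      also have "\<dots> \<le> M * (e / (2 * (M + 1)))" using h(3) M(2) by (intro mult_left_mono) auto
      also have "\<dots> \<le> e / 2"
      proof -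
        have "M * (e / (2 * (M + 1))) = (e / 2) * (M / (M + 1))" using M(2) by (simp add: field_simps)
        also have "\<dots> \<le> (e / 2) * 1" using M(2) e by (intro mult_left_mono) auto
        finally show ?thesis by simp
      qed
      finally show ?thesis by simp
    qed
    finally show "norm (of_real h * (\<Sum>k<G. f (1 - real (Suc k) * h)) - integral {0..1} f) \<le> e" by simp
  qed
qed


lemma riemann_seq:
  fixes f :: "real \<Rightarrow> complex" and p q :: nat
  assumes cont: "continuous_on {0..1} f" and p: "p \<ge> 1" and q: "q \<ge> 2"
  shows "(\<lambda>n. of_real (real p / real q^n) * (\<Sum>k < q^n div p. f (1 - real (Suc k) * (real p / real q^n))))
    \<longlonglongrightarrow> integral {0..1} f"
proof (rule LIMSEQ_I)
  fix r :: real assume r: "r > 0"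
  obtain \<delta> where \<delta>: "\<delta> > 0" and H: "\<And>h G. 0 < h \<and> h < \<delta> \<and> real G * h \<le> 1 \<and> 1 - real G * h \<le> h \<Longrightarrow>
    norm (of_real h * (\<Sum>k<G. f (1 - real (Suc k) * h)) - integral {0..1} f) \<le> r / 2"
    using riemann_abs[OF cont, of "r/2"] r by auto
  have "(\<lambda>n. real p * inverse (real q ^ n)) \<longlonglongrightarrow> real p * 0"
    by (intro tendsto_mult tendsto_const LIMSEQ_inverse_realpow_zero) (use q in simp)
  then obtain N where N: "\<And>n. n \<ge> N \<Longrightarrow> norm (real p * inverse (real q ^ n) - 0) < \<delta>"
    using \<delta> LIMSEQ_D by fastforce
  show "\<exists>no. \<forall>n\<ge>no. norm (of_real (real p / real q^n) * (\<Sum>k < q^n div p. f (1 - real (Suc k) * (real p / real q^n))) - integral {0..1} f) < r"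
  proof (intro exI allI impI)
    fix n assume n: "n \<ge> N"
    define h where "h = real p / real q^n"
    define G where "G = q^n div p"
    have qn: "real q ^ n > 0" using q by simp
    have h0: "h > 0" unfolding h_def using p qn by simp
    have hd: "h < \<delta>" using N[OF n] unfolding h_def by (simp add: divide_inverse)
    have e1: "real (G * p) + real (q^n mod p) = real q ^ n" unfolding G_def
      by (metis div_mult_mod_eq of_nat_add of_nat_power)
    have Gh: "real G * h = real (G * p) / real q ^ n" unfolding h_def by simp
    have c1: "real G * h \<le> 1" unfolding Gh using e1 qn by (simp add: divide_le_eq)
    have "real (q^n mod p) < real p" using p by simp
    have "1 - real G * h = (real q ^ n - real (G * p)) / real q ^ n" unfolding Gh using qn by (simp add: field_simps)
    also have "real q ^ n - real (G * p) = real (q^n mod p)" using e1 by linarith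
    also have "real (q^n mod p) / real q ^ n \<le> real p / real q ^ n"
      using \<open>real (q^n mod p) < real p\<close> qn by (intro divide_right_mono) auto
    finally have c2: "1 - real G * h \<le> h" unfolding h_def .
    have "norm (of_real h * (\<Sum>k<G. f (1 - real (Suc k) * h)) - integral {0..1} f) \<le> r / 2"
      using H[of h G] h0 hd c1 c2 by blast
    also have "\<dots> < r" using r by simp
    finally show "norm (of_real (real p / real q^n) * (\<Sum>k < q^n div p. f (1 - real (Suc k) * (real p / real q^n))) - integral {0..1} f) < r"
      unfolding h_def G_def .
  qed
qed



lemma uhf_eq_same: "(\<And>k. s k = t k) \<Longrightarrow> uhf_eq s t"
proof -
  assume st: "\<And>k. s k = t k"
  have "opnorm (s k - t k) = 0" for k
  proof -
    have "s k \<in> carrier_mat (dim_row (s k)) (dim_col (s k))" by auto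
    then have "s k - t k = 0\<^sub>m (dim_row (s k)) (dim_col (s k))" using st[of k] by simp
    then show ?thesis by (simp add: opnorm_zero)
  qed
  then show ?thesis unfolding uhf_eq_def by simp
qed

lemma grp_diff_c: "grp L N c x - grp L N d x = grp L N (\<lambda>k. c k - d k) x"
  by (rule eq_matI) (auto simp: gent_def algebra_simps split: sum.splits prod.splits)

lemma blockmat_one: "M \<in> carrier_mat N N \<Longrightarrow> blockmat 1 N (\<lambda>i j. M) = M"
  by (rule eq_matI) (auto simp: blockmat_def)

lemma psd_one: "psd (1\<^sub>m p)"
  unfolding psd_def by (intro conjI exI[of _ "1\<^sub>m p"]) (auto simp: adjoint_one)

definition wt :: "nat \<Rightarrow> nat \<Rightarrow> nat \<Rightarrow> nat \<Rightarrow> real" where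
  "wt p q n k = 1 - real p * real (Suc k) / real q ^ n"

definition phi :: "nat \<Rightarrow> nat \<Rightarrow> complex mat \<Rightarrow> nat \<Rightarrow> complex mat" where
  "phi p q x n = grp (lay p q n) (q^n) (\<lambda>k. complex_of_real (wt p q n k)) x"

lemma wt_range:
  assumes q: "q \<ge> 1" and k: "k < q^n div p"
  shows "0 \<le> wt p q n k" "wt p q n k \<le> 1"
proof -
  have qn: "real q ^ n > 0" using q by simp
  have "p * Suc k \<le> p * (q^n div p)" using k by (intro mult_left_mono) auto
  also have "\<dots> \<le> q^n" by simp
  finally have "real p * real (Suc k) \<le> real q ^ n" by (metis of_nat_le_iff of_nat_mult of_nat_power)
  then show "0 \<le> wt p q n k" unfolding wt_def using qn by (simp add: divide_le_eq)
  show "wt p q n k \<le> 1" unfolding wt_def using qn by simp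
qed

lemma wt_diff:
  assumes p: "p \<ge> 1" and q: "q \<ge> 1" and K: "K < q^(m+d) div p"
  shows "\<bar>(if K < q^d * (q^m div p) then wt p q m (K div q^d) else 0) - wt p q (m+d) K\<bar> \<le> real p / real q ^ m"
proof -
  define Qm D where "Qm = real q ^ m" "D = real q ^ d"
  have pos: "Qm > 0" "D > 0" using q unfolding Qm_D_def by auto
  have Q: "real q ^ (m+d) = D * Qm" unfolding Qm_D_def by (simp add: power_add)
  show ?thesis
  proof (cases "K < q^d * (q^m div p)")
    case True
    define k e where "k = K div q^d" "e = K mod q^d"
    have "K = k * q^d + e" unfolding k_e_def by (rule div_mult_mod_eq[symmetric])
    then have Ke: "real K = real k * D + real e" unfolding Qm_D_def by simp
    have "e < q^d" unfolding k_e_def using q by simp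
    then have "e + 1 \<le> q^d" by simp
    then have "real (e + 1) \<le> real (q^d)" by (simp only: of_nat_le_iff)
    then have e: "real e + 1 \<le> D" unfolding Qm_D_def by simp
    have "wt p q m k - wt p q (m+d) K = real p * (real K + 1) / (D * Qm) - real p * (real k + 1) / Qm"
      unfolding wt_def Q Qm_D_def by (simp add: algebra_simps)
    also have "\<dots> = real p * (real e + 1 - D) / (D * Qm)"
      unfolding Ke using pos by (simp add: field_simps)
    finally have eq: "wt p q m k - wt p q (m+d) K = real p * (real e + 1 - D) / (D * Qm)" .
    have u: "real p * (real e + 1 - D) / (D * Qm) \<le> 0"
      using e pos by (intro divide_nonpos_pos mult_nonneg_nonpos) auto
    have "- (real p / Qm) = real p * (- D) / (D * Qm)" using pos by (simp add: field_simps)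
    also have "\<dots> \<le> real p * (real e + 1 - D) / (D * Qm)"
      using pos by (intro divide_right_mono mult_left_mono) auto
    finally have l: "- (real p / Qm) \<le> real p * (real e + 1 - D) / (D * Qm)" .
    have pq: "real p / Qm \<ge> 0" using pos by simp
    have "\<bar>real p * (real e + 1 - D) / (D * Qm)\<bar> \<le> real p / Qm"
      using u l pq by (subst abs_le_iff) linarith
    then have "\<bar>wt p q m k - wt p q (m+d) K\<bar> \<le> real p / Qm" using eq by simp
    then show ?thesis using True unfolding k_e_def Qm_D_def by simp
  next
    case False
    have K0: "0 \<le> wt p q (m+d) K" by (rule wt_range(1)[OF q K])
    define G R where "G = q^m div p" "R = q^m mod p"
    have "q^m = p * G + R" unfolding G_R_def by simp
    then have "real (q^m) = real (p * G + R)" by (simp only:)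
    then have qm: "real q ^ m = real p * real G + real R" by simp
    have "R < p" unfolding G_R_def using p by simp
    then have "R + 1 \<le> p" by simp
    then have "real (R + 1) \<le> real p" by (simp only: of_nat_le_iff)
    then have R: "real R + 1 \<le> real p" by simp
    have "q^d * G \<le> K" using False unfolding G_R_def by simp
    then have "real (q^d * G) \<le> real K" by (simp only: of_nat_le_iff)
    then have KG: "real K \<ge> D * real G" unfolding Qm_D_def by simp
    have "wt p q (m+d) K = 1 - real p * (real K + 1) / (D * Qm)" unfolding wt_def Q by simp
    also have "\<dots> \<le> 1 - real p * (D * real G + 1) / (D * Qm)"
    proof -
      have "real p * (D * real G + 1) \<le> real p * (real K + 1)" using KG by (intro mult_left_mono) auto
      then have "real p * (D * real G + 1) / (D * Qm) \<le> real p * (real K + 1) / (D * Qm)"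
        using pos by (intro divide_right_mono) auto
      then show ?thesis by linarith
    qed
    also have "\<dots> = (D * Qm - real p * D * real G - real p) / (D * Qm)" using pos by (simp add: field_simps)
    also have "\<dots> = (D * real R - real p) / (D * Qm)" unfolding Qm_D_def qm by (simp add: algebra_simps)
    also have "\<dots> \<le> (D * real p) / (D * Qm)"
    proof -
      have "D * real R \<le> D * real p" using R pos by (intro mult_left_mono) auto
      then have "D * real R - real p \<le> D * real p" by linarith
      then show ?thesis using pos by (intro divide_right_mono) auto
    qed
    also have "\<dots> = real p / Qm" using pos by simp
    finally show ?thesis using False K0 unfolding Qm_D_def by simp
  qed
qed


lemma phi_carrier[simp]: "phi p q x n \<in> carrier_mat (q^n) (q^n)"
  unfolding phi_def by simp

lemma pow_small:
  assumes q: "q \<ge> 2" and e: "e > 0"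
  shows "\<exists>N. \<forall>n\<ge>N. real p / real q ^ n < e"
proof -
  have "(\<lambda>n. real p * inverse (real q ^ n)) \<longlonglongrightarrow> real p * 0"
    by (intro tendsto_mult tendsto_const LIMSEQ_inverse_realpow_zero) (use q in simp)
  then obtain N where N: "\<And>n. n \<ge> N \<Longrightarrow> norm (real p * inverse (real q ^ n) - 0) < e"
    using e LIMSEQ_D by fastforce
  have "real p / real q ^ n < e" if "n \<ge> N" for n
    using N[OF that] by (simp add: divide_inverse)
  then show ?thesis by blast
qed

lemma phi_elem:
  assumes p: "p \<ge> 2" and q: "q \<ge> 2" and x: "x \<in> carrier_mat p p"
  shows "uhf_elem q (phi p q x)"
  unfolding uhf_elem_def
proof (intro conjI allI impI)
  fix k show "phi p q x k \<in> carrier_mat (q^k) (q^k)" by simp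
next
  fix e :: real assume e: "e > 0"
  define B where "B = opnorm x + 1"
  have B: "B > 0" unfolding B_def using opnorm_ge0[of x] by simp
  obtain N where N: "\<And>n. n \<ge> N \<Longrightarrow> real p / real q ^ n < e / B" using pow_small[OF q, of "e / B"] e B by auto
  have q1: "q \<ge> 1" using q by simp
  show "\<exists>N. \<forall>m n. N \<le> m \<longrightarrow> m \<le> n \<longrightarrow> opnorm (uhf_emb q m n (phi p q x m) - phi p q x n) < e"
  proof (intro exI allI impI)
    fix m n assume mn: "N \<le> m" "m \<le> n"
    define d where "d = n - m"
    have n: "n = m + d" unfolding d_def using mn by simp
    define c' where "c' = (\<lambda>K. if K < q^d * (q^m div p) then complex_of_real (wt p q m (K div q^d)) else 0)"
    have "uhf_emb q m n (phi p q x m) = grp (lay p q n) (q^n) c' x"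
      unfolding phi_def n c'_def by (rule emb_grp[OF p q1 x])
    then have "uhf_emb q m n (phi p q x m) - phi p q x n = grp (lay p q n) (q^n) (\<lambda>K. c' K - complex_of_real (wt p q n K)) x"
      unfolding phi_def by (simp add: grp_diff_c)
    also have "opnorm \<dots> \<le> real p / real q ^ m * opnorm x"
    proof (rule grp_opnorm[OF lay_bij[OF p q1] x])
      show "0 \<le> real p / real q ^ m" by simp
      fix K assume K: "K < q^n div p"
      have eq: "c' K - complex_of_real (wt p q n K) = complex_of_real ((if K < q^d * (q^m div p) then wt p q m (K div q^d) else 0) - wt p q (m+d) K)"
        unfolding c'_def n by simp
      show "cmod (c' K - complex_of_real (wt p q n K)) \<le> real p / real q ^ m"
        unfolding eq norm_of_real by (rule wt_diff) (use p q K n in auto)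
    qed
    also have "\<dots> \<le> real p / real q ^ N * opnorm x"
    proof (intro mult_right_mono opnorm_ge0 divide_left_mono)
      show "real q ^ N \<le> real q ^ m" using mn q by (intro power_increasing) auto
    qed (use q in auto)
    also have "\<dots> \<le> real p / real q ^ N * B" unfolding B_def by (intro mult_left_mono) auto
    also have "\<dots> < e / B * B" using N[of N] B by (intro mult_strict_right_mono) auto
    also have "\<dots> = e" using B by simp
    finally show "opnorm (uhf_emb q m n (phi p q x m) - phi p q x n) < e" .
  qed
qed


lemma phi_opnorm_le:
  assumes p: "p \<ge> 2" and q: "q \<ge> 2" and x: "x \<in> carrier_mat p p"
  shows "opnorm (phi p q x k) \<le> opnorm x"
proof -
  have q1: "q \<ge> 1" using q by simp
  have "opnorm (phi p q x k) \<le> 1 * opnorm x"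
    unfolding phi_def
  proof (rule grp_opnorm[OF lay_bij[OF p q1] x])
    fix K assume K: "K < q^k div p"
    show "cmod (complex_of_real (wt p q k K)) \<le> 1"
      using wt_range[OF q1 K] by simp
  qed simp
  then show ?thesis by simp
qed

lemma phi_norm_tendsto:
  assumes p: "p \<ge> 2" and q: "q \<ge> 2" and x: "x \<in> carrier_mat p p"
  shows "(\<lambda>k. opnorm (phi p q x k)) \<longlonglongrightarrow> opnorm x"
proof (rule tendsto_sandwich)
  have q1: "q \<ge> 1" using q by simp
  have "(\<lambda>k. real p * inverse (real q ^ k)) \<longlonglongrightarrow> real p * 0"
    by (intro tendsto_mult tendsto_const LIMSEQ_inverse_realpow_zero) (use q in simp)
  then have h: "(\<lambda>k. real p * inverse (real q ^ k)) \<longlonglongrightarrow> 0" by simp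
  have "(\<lambda>k. (1 - real p * inverse (real q ^ k)) * opnorm x) \<longlonglongrightarrow> (1 - 0) * opnorm x"
    by (rule tendsto_mult[OF tendsto_diff[OF tendsto_const h] tendsto_const])
  then show "(\<lambda>k. (1 - real p * inverse (real q ^ k)) * opnorm x) \<longlonglongrightarrow> opnorm x" by simp
  show "(\<lambda>k. opnorm x) \<longlonglongrightarrow> opnorm x" by simp
  show "\<forall>\<^sub>F k in sequentially. opnorm (phi p q x k) \<le> opnorm x"
    using phi_opnorm_le[OF p q x] by simp
  show "\<forall>\<^sub>F k in sequentially. (1 - real p * inverse (real q ^ k)) * opnorm x \<le> opnorm (phi p q x k)"
    unfolding eventually_sequentially
  proof (intro exI allI impI)
    fix k assume k: "k \<ge> p"
    have "p < 2^p" by (rule less_exp)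
    also have "(2::nat)^p \<le> q^p" using q by (intro power_mono) auto
    also have "q^p \<le> q^k" using q k by (intro power_increasing) auto
    finally have G: "q^k div p > 0" using p by (simp add: div_greater_zero_iff)
    have "cmod (complex_of_real (wt p q k 0)) * opnorm x \<le> opnorm (phi p q x k)"
      unfolding phi_def by (rule grp_opnorm_lower[OF lay_bij[OF p q1] x G])
    moreover have "cmod (complex_of_real (wt p q k 0)) = 1 - real p * inverse (real q ^ k)"
    proof -
      have "cmod (complex_of_real (wt p q k 0)) = wt p q k 0"
        unfolding norm_of_real using wt_range(1)[OF q1 G] by simp
      also have "\<dots> = 1 - real p * inverse (real q ^ k)" by (simp add: wt_def divide_inverse)
      finally show ?thesis .
    qed
    ultimately show "(1 - real p * inverse (real q ^ k)) * opnorm x \<le> opnorm (phi p q x k)" by simp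
  qed
qed

lemma phi_uhf_norm:
  assumes p: "p \<ge> 2" and q: "q \<ge> 2" and x: "x \<in> carrier_mat p p"
  shows "uhf_norm (phi p q x) = opnorm x"
  unfolding uhf_norm_def using phi_norm_tendsto[OF assms] by (rule limI)

lemma phi_psd_one:
  assumes p: "p \<ge> 2" and q: "q \<ge> 2"
  shows "psd (phi p q (1\<^sub>m p) k)"
proof -
  have q1: "q \<ge> 1" using q by simp
  have "psd (blockmat 1 (q^k) (\<lambda>i j. grp (lay p q k) (q^k) (\<lambda>K. complex_of_real (wt p q k K)) ((\<lambda>i j. 1\<^sub>m p) i j)))"
  proof (rule grp_cp[OF lay_bij[OF p q1]])
    show "\<forall>i<1. \<forall>j<1. (\<lambda>i j. 1\<^sub>m p) i j \<in> carrier_mat p p" by simp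
    have "blockmat 1 p (\<lambda>i j. 1\<^sub>m p) = 1\<^sub>m p" by (rule blockmat_one) simp
    then show "psd (blockmat 1 p (\<lambda>i j. 1\<^sub>m p))" using psd_one[of p] by simp
    fix K assume K: "K < q^k div p"
    show "0 \<le> wt p q k K" by (rule wt_range(1)[OF q1 K])
  qed simp
  moreover have "blockmat 1 (q^k) (\<lambda>i j. grp (lay p q k) (q^k) (\<lambda>K. complex_of_real (wt p q k K)) ((\<lambda>i j. 1\<^sub>m p) i j))
     = grp (lay p q k) (q^k) (\<lambda>K. complex_of_real (wt p q k K)) (1\<^sub>m p)"
    by (rule blockmat_one) simp
  ultimately show ?thesis unfolding phi_def by simp
qed

lemma phi_one_diag:
  assumes p: "p \<ge> 2" and q: "q \<ge> 2"
  shows "phi p q (1\<^sub>m p) k = diag_of (q^k) (\<lambda>s. complex_of_real (case lay p q k s of Inl (K,a) \<Rightarrow> wt p q k K | Inr _ \<Rightarrow> 0))"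
proof -
  have q1: "q \<ge> 1" using q by simp
  have "phi p q (1\<^sub>m p) k = diag_of (q^k) (\<lambda>s. case lay p q k s of Inl (K,a) \<Rightarrow> complex_of_real (wt p q k K) | Inr _ \<Rightarrow> 0)"
    unfolding phi_def by (rule grp_one[OF lay_bij[OF p q1]])
  also have "(\<lambda>s. case lay p q k s of Inl (K,a) \<Rightarrow> complex_of_real (wt p q k K) | Inr _ \<Rightarrow> 0)
     = (\<lambda>s. complex_of_real (case lay p q k s of Inl (K,a) \<Rightarrow> wt p q k K | Inr _ \<Rightarrow> 0))"
    by (rule ext) (auto split: sum.splits)
  finally show ?thesis .
qed

lemma phi_trace:
  fixes f :: "real \<Rightarrow> complex"
  assumes p: "p \<ge> 2" and q: "q \<ge> 2" and f0: "f 0 = 0"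
  shows "ntrace (mat_fun f (phi p q (1\<^sub>m p) k)) =
    of_real (real p / real q^k) * (\<Sum>K < q^k div p. f (1 - real (Suc K) * (real p / real q^k)))"
proof -
  have q1: "q \<ge> 1" using q by simp
  define F where "F z = f (case z of Inl (K,a) \<Rightarrow> wt p q k K | Inr _ \<Rightarrow> 0)" for z :: "(nat \<times> nat) + nat"
  have "ntrace (mat_fun f (phi p q (1\<^sub>m p) k)) = (\<Sum>s<q^k. F (lay p q k s)) / of_nat (q^k)"
    unfolding phi_one_diag[OF p q] mat_fun_diag F_def ..
  also have "(\<Sum>s<q^k. F (lay p q k s)) = (\<Sum>K<q^k div p. \<Sum>a<p. F (Inl (K,a))) + (\<Sum>l<q^k mod p. F (Inr l))"
    by (rule sum_L[OF lay_bij[OF p q1]])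
  also have "\<dots> = of_nat p * (\<Sum>K<q^k div p. f (wt p q k K))"
    using f0 by (simp add: F_def sum_distrib_left)
  finally have "ntrace (mat_fun f (phi p q (1\<^sub>m p) k)) = of_nat p * (\<Sum>K<q^k div p. f (wt p q k K)) / of_nat (q^k)" .
  also have "\<dots> = of_real (real p / real q^k) * (\<Sum>K < q^k div p. f (1 - real (Suc K) * (real p / real q^k)))"
  proof -
    have e: "(\<Sum>K<q^k div p. f (wt p q k K)) = (\<Sum>K<q^k div p. f (1 - real (Suc K) * (real p / real q^k)))"
      by (intro sum.cong refl) (simp add: wt_def mult.commute)
    have "of_real (real p / real q^k) = (of_nat p / of_nat (q^k) :: complex)" by simp
    then show ?thesis unfolding e by simp
  qed
  finally show ?thesis .
qed


theorem lemma4p5: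
  fixes p q :: nat
  assumes "p \<ge> 2" and "q \<ge> 2"
  shows "\<exists>\<phi>. cpc_order_zero p q \<phi> \<and> lebesgue_contraction q (\<phi> (1\<^sub>m p))"
proof (intro exI conjI)
  note p = assms(1) and q = assms(2)
  have q1: "q \<ge> 1" using q by simp
  note bij = lay_bij[OF p q1]
  show "cpc_order_zero p q (phi p q)"
    unfolding cpc_order_zero_def
  proof (intro conjI ballI allI impI)
    fix x :: "complex mat" assume x: "x \<in> carrier_mat p p"
    show "uhf_elem q (phi p q x)" by (rule phi_elem[OF p q x])
  next
    fix x y :: "complex mat" and c :: complex assume x: "x \<in> carrier_mat p p" and y: "y \<in> carrier_mat p p"
    show "uhf_eq (phi p q (c \<cdot>\<^sub>m x + y)) (\<lambda>k. c \<cdot>\<^sub>m phi p q x k + phi p q y k)"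
      by (rule uhf_eq_same) (simp add: phi_def grp_lin[OF bij x y])
  next
    fix n :: nat and X :: "nat \<Rightarrow> nat \<Rightarrow> complex mat" assume n: "n \<ge> 1" and X: "\<forall>i<n. \<forall>j<n. X i j \<in> carrier_mat p p"
      and ps: "psd (blockmat n p X)"
    show "uhf_matpos q n (\<lambda>i j. phi p q (X i j))"
      unfolding uhf_matpos_def
    proof (intro exI conjI allI)
      fix k
      show "blockmat n (q^k) (\<lambda>i j. phi p q (X i j) k) \<in> carrier_mat (n * q^k) (n * q^k)"
        by (simp add: blockmat_def)
      show "psd (blockmat n (q^k) (\<lambda>i j. phi p q (X i j) k))"
        unfolding phi_def
        by (rule grp_cp[OF lay_bij[OF p q1] X ps]) (use wt_range[OF q1] in auto)
    next
      have "opnorm (blockmat n (q^k) (\<lambda>i j. phi p q (X i j) k) - blockmat n (q^k) (\<lambda>i j. phi p q (X i j) k)) = 0" for k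
      proof -
        have "blockmat n (q^k) (\<lambda>i j. phi p q (X i j) k) \<in> carrier_mat (n * q^k) (n * q^k)" by (simp add: blockmat_def)
        then show ?thesis by (simp add: opnorm_zero)
      qed
      then show "(\<lambda>k. opnorm (blockmat n (q^k) (\<lambda>i j. phi p q (X i j) k) - blockmat n (q^k) (\<lambda>i j. phi p q (X i j) k))) \<longlonglongrightarrow> 0"
        by simp
    qed
  next
    fix x :: "complex mat" assume x: "x \<in> carrier_mat p p"
    show "uhf_norm (phi p q x) \<le> opnorm x" using phi_uhf_norm[OF p q x] by simp
  next
    fix x y :: "complex mat" assume x: "x \<in> carrier_mat p p" and y: "y \<in> carrier_mat p p" and xy: "x * y = 0\<^sub>m p p"
    show "uhf_eq (\<lambda>k. phi p q x k * phi p q y k) (\<lambda>k. 0\<^sub>m (q^k) (q^k))"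
      by (rule uhf_eq_same) (simp add: phi_def grp_mult[OF bij x y] xy grp_zero[OF bij])
  qed
  show "lebesgue_contraction q (phi p q (1\<^sub>m p))"
    unfolding lebesgue_contraction_def
  proof (intro conjI allI impI)
    show "uhf_elem q (phi p q (1\<^sub>m p))" by (rule phi_elem[OF p q]) simp
    show "uhf_pos q (phi p q (1\<^sub>m p))"
      unfolding uhf_pos_def
      by (intro exI[of _ "phi p q (1\<^sub>m p)"] conjI allI uhf_eq_same refl phi_carrier phi_psd_one[OF p q])
    show "uhf_norm (phi p q (1\<^sub>m p)) \<le> 1"
      using phi_uhf_norm[OF p q, of "1\<^sub>m p"] opnorm_one[of p] by simp
    fix f :: "real \<Rightarrow> complex" assume f: "continuous_on {0..1} f \<and> f 0 = 0"
    show "\<exists>t. (\<forall>k. t k \<in> carrier_mat (q^k) (q^k) \<and> psd (t k) \<and> opnorm (t k) \<le> 1) \<and>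
             uhf_eq (phi p q (1\<^sub>m p)) t \<and>
             (\<lambda>k. ntrace (mat_fun f (t k))) \<longlonglongrightarrow> integral {0..1} f"
    proof (intro exI[of _ "phi p q (1\<^sub>m p)"] conjI allI)
      fix k
      show "phi p q (1\<^sub>m p) k \<in> carrier_mat (q^k) (q^k)" by simp
      show "psd (phi p q (1\<^sub>m p) k)" by (rule phi_psd_one[OF p q])
      show "opnorm (phi p q (1\<^sub>m p) k) \<le> 1"
        using phi_opnorm_le[OF p q, of "1\<^sub>m p" k] opnorm_one[of p] by simp
    next
      show "uhf_eq (phi p q (1\<^sub>m p)) (phi p q (1\<^sub>m p))" by (rule uhf_eq_same) simp
      have "(\<lambda>k. ntrace (mat_fun f (phi p q (1\<^sub>m p) k))) =
        (\<lambda>k. of_real (real p / real q^k) * (\<Sum>K < q^k div p. f (1 - real (Suc K) * (real p / real q^k))))"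
        using phi_trace[OF p q] f by simp
      also have "\<dots> \<longlonglongrightarrow> integral {0..1} f"
        by (rule riemann_seq) (use f p q in auto)
      finally show "(\<lambda>k. ntrace (mat_fun f (phi p q (1\<^sub>m p) k))) \<longlonglongrightarrow> integral {0..1} f" .
    qed
  qed
qed


end
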